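(* Fix $\lambda\in[0,1)$, $p\in[0,1]$, $T>0$, and consider the coupled construction below. Let $\mathcal{C}$ be the set of $\omega$ with $\lim_{N\to\infty}\sup_{t\in[0,T]}|W^N(\omega,t)-(1+\lambda)t|=0$ and $\lim_{N\to\infty}\frac1N\sum_{k=1}^N\mathbb{I}_{[a,b)}(U(\omega,k))=b-a$ for all $[a,b)\subset[0,1]$, $a<b$. Assume there is $\mathbf{v}^0\in\overline{\mathcal{V}}^\infty$ with $\|\mathbf{V}^N(\omega,0)-\mathbf{v}^0\|_w\to0$ for all $\omega\in\mathcal{C}$. Fix $\omega\in\mathcal{C}$ and let $\mathbf{x}=(\mathbf{v},\mathbf{a},\mathbf{l},\mathbf{c})$ be a coordinate-wise Lipschitz continuous function on $[0,T]$ that is the limit (each component in $d^{\mathbb{Z}_+}$) of some subsequence of $(\mathbf{X}^N(\omega,\cdot))_N$. Let $t$ be a point at which all coordinates of $\mathbf{x}$ are differentiable. Then for all $i\ge1$, $\dot{\mathbf{a}}_i(t)=\lambda(\mathbf{v}_{i-1}(t)-\mathbf{v}_i(t))$, $\dot{\mathbf{l}}_i(t)=(1-p)(\mathbf{v}_i(t)-\mathbf{v}_{i+1}(t))$, $\dot{\mathbf{c}}_i(t)=g_i(\mathbf{v}(t))$, with $\mathbf{v}(0)=\mathbf{v}^0$ and $\mathbf{v}_0(s)-\mathbf{v}_1(s)=1$ for all $s\in[0,T]$. In other words, all such limits $\mathbf{v}$ satisfy the fluid model equations.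
   Context: $\mathcal{S}=\{\mathbf{s}\in[0,1]^{\mathbb{Z}_+}:1=\mathbf{s}_0\ge\mathbf{s}_1\ge\cdots\ge0\}$, $\overline{\mathcal{S}}^\infty=\{\mathbf{s}\in\mathcal{S}:\sum_{i\ge1}\mathbf{s}_i<\infty\}$, $\overline{\mathcal{V}}^\infty=\{\mathbf{v}:\mathbf{v}_i=\sum_{j\ge i}\mathbf{s}_j\ \forall i,\text{ for some }\mathbf{s}\in\overline{\mathcal{S}}^\infty\}$; $\|\mathbf{x}\|_w^2=\sum_{i\ge0}2^{-i}\mathbf{x}_i^2$; $d^{\mathbb{Z}_+}(\mathbf{x},\mathbf{y})=\sup_{t\in[0,T]}\|\mathbf{x}(t)-\mathbf{y}(t)\|_w$. $g_i(\mathbf{v})=p$ if $\mathbf{v}_i>0$, $=\min\{\lambda\mathbf{v}_{i-1},p\}$ if $\mathbf{v}_i=0<\mathbf{v}_{i-1}$, $=0$ if $\mathbf{v}_i=\mathbf{v}_{i-1}=0$. Coupled construction: $W$ a Poisson process of rate $1+\lambda$ on $\Omega_W$; $U(k)$, $k\ge1$, i.i.d. uniform on $[0,1]$ on $\Omega_U$; initial states $\mathbf{V}^{(0,N)}\in\overline{\mathcal{V}}^\infty$ with coordinates in $\frac1N\mathbb{Z}_+$ on $\Omega_0$; $\Omega$ the product. $W^N(t)=W(Nt)/N$, $t_k$ its $k$-th jump time. $\mathbf{V}^N(0)=\mathbf{V}^{(0,N)}$; $\mathbf{A}^N_i,\mathbf{L}^N_i,\mathbf{C}^N_i$ ($i\ge1$)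 start at 0, constant between jumps; at $t_k$: $\mathbf{A}^N_i\mathrel{+}=1/N$ for each $i\ge1$ with $U(k)\in\frac{\lambda}{1+\lambda}[0,\mathbf{V}^N_{i-1}(t_k-)-\mathbf{V}^N_i(t_k-))$; $\mathbf{L}^N_i\mathrel{+}=1/N$ for each $i\ge1$ with $U(k)\in\frac{\lambda}{1+\lambda}+\frac{1-p}{1+\lambda}[0,\mathbf{V}^N_i(t_k-)-\mathbf{V}^N_{i+1}(t_k-))$; if $U(k)\in[1-\frac{p}{1+\lambda},1)$, $\mathbf{C}^N_j\mathrel{+}=1/N$ for all $1\le j\le\sup\{i:\mathbf{V}^N_i(t_k-)>0\}$. $\mathbf{V}^N_i=\mathbf{V}^N_i(0)+\mathbf{A}^N_i-\mathbf{L}^N_i-\mathbf{C}^N_i$ ($i\ge1$), $\mathbf{V}^N_0=\mathbf{V}^N_1+1$; $\mathbf{X}^N=(\mathbf{V}^N,\mathbf{A}^N,\mathbf{L}^N,\mathbf{C}^N)$. *)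

theory Defs
  imports "HOL-Analysis.Analysis"
begin

definition S_set :: "(nat \<Rightarrow> real) set" where
  "S_set = {s. (\<forall>i. 0 \<le> s i \<and> s i \<le> 1) \<and> s 0 = 1 \<and> (\<forall>i. s (Suc i) \<le> s i)}"

definition Sbar_inf :: "(nat \<Rightarrow> real) set" where
  "Sbar_inf = {s \<in> S_set. summable (\<lambda>i. s (Suc i))}"

definition Vbar_inf :: "(nat \<Rightarrow> real) set" where
  "Vbar_inf = {v. \<exists>s \<in> Sbar_inf. \<forall>i. v i = (\<Sum>j. s (j + i))}"

definition wnorm :: "(nat \<Rightarrow> real) \<Rightarrow> ennreal" where
  "wnorm x = (if summable (\<lambda>i. (1/2)^i * (x i)^2)
              then ennreal (sqrt (\<Sum>i. (1/2)^i * (x i)^2)) else \<infinity>)"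

definition dZ :: "real \<Rightarrow> (real \<Rightarrow> nat \<Rightarrow> real) \<Rightarrow> (real \<Rightarrow> nat \<Rightarrow> real) \<Rightarrow> ennreal" where
  "dZ T x y = (SUP t\<in>{0..T}. wnorm (\<lambda>i. x t i - y t i))"

definition g_fun :: "real \<Rightarrow> real \<Rightarrow> (nat \<Rightarrow> real) \<Rightarrow> nat \<Rightarrow> real" where
  "g_fun lam p v i =
     (if v i > 0 then p
      else if v i = 0 \<and> 0 < v (i - 1) then min (lam * v (i - 1)) p
      else if v i = 0 \<and> v (i - 1) = 0 then 0
      else undefined)"

type_synonym counters = "(nat \<Rightarrow> real) \<times> (nat \<Rightarrow> real) \<times> (nat \<Rightarrow> real)"

definition V_of :: "(nat \<Rightarrow> real) \<Rightarrow> counters \<Rightarrow> nat \<Rightarrow> real" where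
  "V_of V0 st i =
     (case st of (A, L, C) \<Rightarrow>
        if i = 0 then V0 1 + A 1 - L 1 - C 1 + 1 else V0 i + A i - L i - C i)"

text \<open>Update at a jump time with uniform variable u; V is the pre-jump state V(t_k-).
  c + d*[0,x) is written as the image of [0,x) under y |-> c + d*y.
  "1 <= j <= sup {i. V_i > 0}" is written as "1 <= j and exists i >= j with V_i > 0"
  (which also covers an infinite supremum).\<close>
definition step :: "real \<Rightarrow> real \<Rightarrow> nat \<Rightarrow> (nat \<Rightarrow> real) \<Rightarrow> real \<Rightarrow> counters \<Rightarrow> counters" where
  "step lam p N V0 u st =
     (case st of (A, L, C) \<Rightarrow>
       let V = V_of V0 st in
       ((\<lambda>i. A i + (if 1 \<le> i \<and> u \<in> (\<lambda>y. lam / (1 + lam) * y) ` {0..<V (i - 1) - V i}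
                     then 1 / real N else 0)),
        (\<lambda>i. L i + (if 1 \<le> i \<and> u \<in> (\<lambda>y. lam / (1 + lam) + (1 - p) / (1 + lam) * y) ` {0..<V i - V (i + 1)}
                     then 1 / real N else 0)),
        (\<lambda>i. C i + (if 1 \<le> i \<and> u \<in> {1 - p / (1 + lam)..<1} \<and> (\<exists>j\<ge>i. V j > 0)
                     then 1 / real N else 0))))"

primrec counters_after ::
  "real \<Rightarrow> real \<Rightarrow> nat \<Rightarrow> (nat \<Rightarrow> real) \<Rightarrow> (nat \<Rightarrow> real) \<Rightarrow> nat \<Rightarrow> counters" where
  "counters_after lam p N V0 U 0 = (\<lambda>_. 0, \<lambda>_. 0, \<lambda>_. 0)"
| "counters_after lam p N V0 U (Suc k) =
     step lam p N V0 (U (Suc k)) (counters_after lam p N V0 U k)"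

text \<open>The number of jump times t_k <= t of W^N(t) = W(N t)/N is W(N t).\<close>
definition XV :: "real \<Rightarrow> real \<Rightarrow> (real \<Rightarrow> nat) \<Rightarrow> (nat \<Rightarrow> real) \<Rightarrow> (nat \<Rightarrow> nat \<Rightarrow> real) \<Rightarrow> nat \<Rightarrow> real \<Rightarrow> nat \<Rightarrow> real" where
  "XV lam p W U V0 N t = V_of (V0 N) (counters_after lam p N (V0 N) U (W (real N * t)))"

definition XA :: "real \<Rightarrow> real \<Rightarrow> (real \<Rightarrow> nat) \<Rightarrow> (nat \<Rightarrow> real) \<Rightarrow> (nat \<Rightarrow> nat \<Rightarrow> real) \<Rightarrow> nat \<Rightarrow> real \<Rightarrow> nat \<Rightarrow> real" where
  "XA lam p W U V0 N t = fst (counters_after lam p N (V0 N) U (W (real N * t)))"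

definition XL :: "real \<Rightarrow> real \<Rightarrow> (real \<Rightarrow> nat) \<Rightarrow> (nat \<Rightarrow> real) \<Rightarrow> (nat \<Rightarrow> nat \<Rightarrow> real) \<Rightarrow> nat \<Rightarrow> real \<Rightarrow> nat \<Rightarrow> real" where
  "XL lam p W U V0 N t = fst (snd (counters_after lam p N (V0 N) U (W (real N * t))))"

definition XC :: "real \<Rightarrow> real \<Rightarrow> (real \<Rightarrow> nat) \<Rightarrow> (nat \<Rightarrow> real) \<Rightarrow> (nat \<Rightarrow> nat \<Rightarrow> real) \<Rightarrow> nat \<Rightarrow> real \<Rightarrow> nat \<Rightarrow> real" where
  "XC lam p W U V0 N t = snd (snd (counters_after lam p N (V0 N) U (W (real N * t))))"

text \<open>Sample path of a Poisson (counting) process: starts at 0, nondecreasing,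
  right-continuous, unit jumps.\<close>
definition counting_path :: "(real \<Rightarrow> nat) \<Rightarrow> bool" where
  "counting_path W \<longleftrightarrow> W 0 = 0 \<and> mono_on {0..} W
     \<and> (\<forall>s\<ge>0. ((\<lambda>r. real (W r)) \<longlongrightarrow> real (W s)) (at_right s))
     \<and> (\<forall>s>0. \<exists>\<delta>>0. \<forall>r. s - \<delta> < r \<and> r < s \<longrightarrow> W s \<le> W r + 1)"

end

theory Submission
  imports Defs
begin

definition aI :: "real \<Rightarrow> (nat \<Rightarrow> real) \<Rightarrow> real \<Rightarrow> nat \<Rightarrow> bool" where
  "aI lam V u j \<longleftrightarrow> 1 \<le> j \<and> u \<in> (\<lambda>y. lam / (1 + lam) * y) ` {0..<V (j - 1) - V j}"
definition lI :: "real \<Rightarrow> real \<Rightarrow> (nat \<Rightarrow> real) \<Rightarrow> real \<Rightarrow> nat \<Rightarrow> bool" where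
  "lI lam p V u j \<longleftrightarrow> 1 \<le> j \<and> u \<in> (\<lambda>y. lam / (1 + lam) + (1 - p) / (1 + lam) * y) ` {0..<V j - V (j + 1)}"
definition cI :: "real \<Rightarrow> real \<Rightarrow> (nat \<Rightarrow> real) \<Rightarrow> real \<Rightarrow> nat \<Rightarrow> bool" where
  "cI lam p V u j \<longleftrightarrow> 1 \<le> j \<and> u \<in> {1 - p / (1 + lam)..<1} \<and> (\<exists>m\<ge>j. V m > 0)"

definition ind :: "bool \<Rightarrow> nat \<Rightarrow> real" where
  "ind P N = (if P then 1 / real N else 0)"

lemma step_eq:
  "step lam p N V0 u st =
    (case st of (A, L, C) \<Rightarrow>
      ((\<lambda>i. A i + ind (aI lam (V_of V0 st) u i) N),
       (\<lambda>i. L i + ind (lI lam p (V_of V0 st) u i) N),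
       (\<lambda>i. C i + ind (cI lam p (V_of V0 st) u i) N)))"
  by (cases st) (simp add: step_def aI_def lI_def cI_def ind_def Let_def)

lemma V_of_0: "V_of V0 st 0 = V_of V0 st 1 + 1"
  by (cases st) (simp add: V_of_def)

lemma V_of_step:
  assumes "j \<ge> 1"
  shows "V_of V0 (step lam p N V0 u st) j = V_of V0 st j + ind (aI lam (V_of V0 st) u j) N
     - ind (lI lam p (V_of V0 st) u j) N - ind (cI lam p (V_of V0 st) u j) N"
  using assms by (cases st) (simp add: step_eq V_of_def)

abbreviation Vk where "Vk lam p N V0 U k \<equiv> V_of V0 (counters_after lam p N V0 U k)"

lemma ca_Suc_A: "fst (counters_after lam p N V0 U (Suc k)) i =
   fst (counters_after lam p N V0 U k) i + ind (aI lam (Vk lam p N V0 U k) (U (Suc k)) i) N"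
  by (cases "counters_after lam p N V0 U k") (simp add: step_eq)
lemma ca_Suc_L: "fst (snd (counters_after lam p N V0 U (Suc k))) i =
   fst (snd (counters_after lam p N V0 U k)) i + ind (lI lam p (Vk lam p N V0 U k) (U (Suc k)) i) N"
  by (cases "counters_after lam p N V0 U k") (simp add: step_eq)
lemma ca_Suc_C: "snd (snd (counters_after lam p N V0 U (Suc k))) i =
   snd (snd (counters_after lam p N V0 U k)) i + ind (cI lam p (Vk lam p N V0 U k) (U (Suc k)) i) N"
  by (cases "counters_after lam p N V0 U k") (simp add: step_eq)

lemma block_count:
  fixes X :: "nat \<Rightarrow> real"
  assumes step: "\<And>k. X (Suc k) = X k + ind (P (Suc k)) N"
    and "K0 \<le> K1"
  shows "X K1 - X K0 = real (card {m \<in> {K0<..K1}. P m}) / real N"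
  using assms(2)
proof (induction K1 rule: dec_induct)
  case base then show ?case by simp
next
  case (step K)
  have e: "{m \<in> {K0<..Suc K}. P m} = (if P (Suc K) then insert (Suc K) {m \<in> {K0<..K}. P m} else {m \<in> {K0<..K}. P m})"
    using step.hyps by (auto simp: le_Suc_eq)
  have fin: "finite {m \<in> {K0<..K}. P m}" by simp
  have nin: "Suc K \<notin> {m \<in> {K0<..K}. P m}" by simp
  show ?case
  proof (cases "P (Suc K)")
    case True
    then have "card {m \<in> {K0<..Suc K}. P m} = Suc (card {m \<in> {K0<..K}. P m})"
      using e card_insert_disjoint[OF fin nin] by simp
    then show ?thesis using step.IH True assms(1)[of K]
      by (simp add: ind_def add_divide_distrib algebra_simps)
  next
    case False
    then show ?thesis using step.IH e assms(1)[of K] by (simp add: ind_def)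
  qed
qed

lemma V_step_bound:
  shows "\<bar>V_of V0 (step lam p N V0 u st) j - V_of V0 st j\<bar> \<le> 2 / real N"
proof -
  have h: "\<And>i. i \<ge> 1 \<Longrightarrow> \<bar>V_of V0 (step lam p N V0 u st) i - V_of V0 st i\<bar> \<le> 2 / real N"
  proof -
    have "1 / real N \<le> 2 / real N" by (simp add: divide_right_mono)
    then show "\<And>i. i \<ge> 1 \<Longrightarrow> \<bar>V_of V0 (step lam p N V0 u st) i - V_of V0 st i\<bar> \<le> 2 / real N"
      by (simp add: V_of_step ind_def)
  qed
  show ?thesis
  proof (cases "j = 0")
    case True then show ?thesis using h[of 1] by (simp add: V_of_0)
  next
    case False then show ?thesis using h[of j] by simp
  qed
qed

lemma Vk_bound:
  assumes "K0 \<le> k"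
  shows "\<bar>Vk lam p N V0 U k j - Vk lam p N V0 U K0 j\<bar> \<le> 2 * real (k - K0) / real N"
  using assms(1)
proof (induction k rule: dec_induct)
  case base then show ?case by simp
next
  case (step k)
  have "\<bar>Vk lam p N V0 U (Suc k) j - Vk lam p N V0 U k j\<bar> \<le> 2 / real N"
    using V_step_bound by simp
  then have "\<bar>Vk lam p N V0 U (Suc k) j - Vk lam p N V0 U K0 j\<bar> \<le> 2 * real (k - K0) / real N + 2 / real N"
    using step.IH by linarith
  also have "\<dots> = 2 * real (Suc k - K0) / real N" using step.hyps
    by (simp add: Suc_diff_le add_divide_distrib[symmetric] algebra_simps)
  finally show ?case .
qed

definition grid :: "nat \<Rightarrow> real \<Rightarrow> bool" where
  "grid N x \<longleftrightarrow> (\<exists>z::int. x = real_of_int z / real N)"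

lemma grid_add: "grid N x \<Longrightarrow> grid N y \<Longrightarrow> grid N (x + y)"
  unfolding grid_def by (metis add_divide_distrib of_int_add)
lemma grid_diff: "grid N x \<Longrightarrow> grid N y \<Longrightarrow> grid N (x - y)"
  unfolding grid_def by (metis diff_divide_distrib of_int_diff)
lemma grid_one_over: "grid N (1 / real N)"
  unfolding grid_def by (rule exI[of _ 1]) simp
lemma grid_zero: "grid N 0"
  unfolding grid_def by (rule exI[of _ 0]) simp
lemma grid_one: "N > 0 \<Longrightarrow> grid N 1"
  unfolding grid_def by (rule exI[of _ "int N"]) simp
lemma grid_ind: "grid N (ind P N)"
  by (simp add: ind_def grid_one_over grid_zero)
lemma grid_lt:
  assumes "N > 0" "grid N x" "grid N y" "x < y"
  shows "x + 1 / real N \<le> y"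
proof -
  obtain z1 z2 :: int where z: "x = z1 / real N" "y = z2 / real N" using assms unfolding grid_def by blast
  have "z1 < z2" using assms(1,4) z by (simp add: divide_strict_right_mono_neg) (metis divide_strict_right_mono of_int_less_iff of_nat_0_less_iff less_asym' linorder_neqE_linordered_idom divide_right_mono of_int_le_iff not_less)
  then have "real_of_int z1 + 1 \<le> real_of_int z2" by linarith
  then have "(real_of_int z1 + 1) / real N \<le> real_of_int z2 / real N" using assms(1) by (simp add: divide_right_mono)
  then show ?thesis using z by (simp add: add_divide_distrib)
qed

definition INV :: "nat \<Rightarrow> real \<Rightarrow> (nat \<Rightarrow> real) \<Rightarrow> bool" where
  "INV N D V \<longleftrightarrow> V 0 = V 1 + 1 \<and> (\<forall>j\<ge>1. grid N (V j)) \<and> (\<forall>j\<ge>1. - D \<le> V j)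
     \<and> (\<forall>j m. 1 \<le> j \<longrightarrow> j \<le> m \<longrightarrow> V m - V j \<le> D) \<and> (\<forall>j. V j - V (Suc j) \<le> 1)"

lemma INV_grid_all:
  assumes "INV N D V" "N > 0" shows "grid N (V j)"
proof (cases "j = 0")
  case True
  then have "V j = V 1 + 1" using assms by (simp add: INV_def)
  then show ?thesis using assms grid_add grid_one by (simp add: INV_def)
next
  case False then show ?thesis using assms by (simp add: INV_def)
qed

lemma ind_simps: "ind True N = 1 / real N" "ind False N = 0"
  by (simp_all add: ind_def)

lemma ind_nonneg: "0 \<le> ind P N" by (simp add: ind_def)
lemma ind_le: "ind P N \<le> 1 / real N" by (simp add: ind_def)

lemma LA:
  assumes inv: "INV N D V" and gD: "grid N D" and N: "N > 0"
    and V'0: "V' 0 = V' 1 + 1"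
    and V': "\<forall>j\<ge>1. V' j = V j + ind (w < V (j - 1) - V j) N"
  shows "INV N D V'"
proof -
  have g: "\<And>j. grid N (V j)" using INV_grid_all[OF inv N] .
  have s1: "\<And>j. V j - V (Suc j) \<le> 1" and s0: "V 0 = V 1 + 1" using inv by (auto simp: INV_def)
  have mu: "\<And>j m. 1 \<le> j \<Longrightarrow> j \<le> m \<Longrightarrow> V m - V j \<le> D" using inv by (auto simp: INV_def)
  have nu: "\<And>j. 1 \<le> j \<Longrightarrow> - D \<le> V j" using inv by (auto simp: INV_def)
  have g': "\<forall>j\<ge>1. grid N (V' j)" using V' g grid_add grid_ind by simp
  have nu': "\<forall>j\<ge>1. - D \<le> V' j"
  proof (intro allI impI)
    fix j :: nat assume "j \<ge> 1"
    have "V' j = V j + ind (w < V (j - 1) - V j) N" using V' \<open>j \<ge> 1\<close> by simp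
    then show "- D \<le> V' j" using nu[of j] \<open>j \<ge> 1\<close> ind_nonneg[of "w < V (j - 1) - V j" N] by linarith
  qed
  have mu': "\<forall>j m. 1 \<le> j \<longrightarrow> j \<le> m \<longrightarrow> V' m - V' j \<le> D"
  proof (intro allI impI)
    fix j m :: nat assume j: "1 \<le> j" and jm: "j \<le> m"
    show "V' m - V' j \<le> D"
    proof (cases "w < V (m - 1) - V m \<and> \<not> w < V (j - 1) - V j")
      case False
      then have "ind (w < V (m - 1) - V m) N - ind (w < V (j - 1) - V j) N \<le> 0"
        by (auto simp: ind_def)
      moreover have "V' m = V m + ind (w < V (m - 1) - V m) N" "V' j = V j + ind (w < V (j - 1) - V j) N"
        using V' j jm by auto
      ultimately show ?thesis using mu[OF j jm] by linarith
    next
      case True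
      then have jm': "j < m" using jm by (cases "j = m") auto
      show ?thesis
      proof (cases "j = 1")
        case True
        then have "V (j - 1) - V j = 1" using s0 by simp
        moreover have "V (m - 1) - V m \<le> 1" using s1[of "m - 1"] jm' by simp
        ultimately show ?thesis using \<open>w < V (m - 1) - V m \<and> \<not> w < V (j - 1) - V j\<close> by linarith
      next
        case False
        then have j2: "1 \<le> j - 1" using j by simp
        have "V (m - 1) - V (j - 1) \<le> D" using mu[OF j2] jm by simp
        then have lt: "V m - V j < D" using True by linarith
        have "V m - V j + 1 / real N \<le> D"
          using grid_lt[OF N grid_diff[OF g g] gD lt] .
        then show ?thesis using V' j jm True by (simp add: ind_def)
      qed
    qed
  qed
  have s1': "\<forall>j. V' j - V' (Suc j) \<le> 1"
  proof
    fix j :: nat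
    show "V' j - V' (Suc j) \<le> 1"
    proof (cases "j = 0")
      case True then show ?thesis using V'0 by simp
    next
      case False
      then have j: "j \<ge> 1" by simp
      show ?thesis
      proof (cases "w < V (j - 1) - V j \<and> \<not> w < V j - V (Suc j)")
        case True
        then have lt: "V j - V (Suc j) < V (j - 1) - V j" by linarith
        have "V (j - 1) - V j \<le> 1" using s1[of "j - 1"] j by simp
        then have "V j - V (Suc j) + 1 / real N \<le> 1"
          using grid_lt[OF N grid_diff[OF g g] grid_diff[OF g g] lt] by linarith
        then show ?thesis using V' j True by (simp add: ind_def)
      next
        case False
        then have "ind (w < V (j - 1) - V j) N - ind (w < V (Suc j - 1) - V (Suc j)) N \<le> 0"
          by (auto simp: ind_def)
        moreover have "V' j = V j + ind (w < V (j - 1) - V j) N"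
          "V' (Suc j) = V (Suc j) + ind (w < V (Suc j - 1) - V (Suc j)) N"
          using V' j by auto
        ultimately show ?thesis using s1[of j] by linarith
      qed
    qed
  qed
  show ?thesis unfolding INV_def using V'0 g' nu' mu' s1' by blast
qed

lemma LL:
  assumes inv: "INV N D V" and gD: "grid N D" and N: "N > 0" and w: "0 \<le> w"
    and V'0: "V' 0 = V' 1 + 1"
    and V': "\<forall>j\<ge>1. V' j = V j - ind (w < V j - V (Suc j)) N"
  shows "INV N D V'"
proof -
  have g: "\<And>j. grid N (V j)" using INV_grid_all[OF inv N] .
  have s1: "\<And>j. V j - V (Suc j) \<le> 1" and s0: "V 0 = V 1 + 1" using inv by (auto simp: INV_def)
  have mu: "\<And>j m. 1 \<le> j \<Longrightarrow> j \<le> m \<Longrightarrow> V m - V j \<le> D" using inv by (auto simp: INV_def)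
  have nu: "\<And>j. 1 \<le> j \<Longrightarrow> - D \<le> V j" using inv by (auto simp: INV_def)
  have g': "\<forall>j\<ge>1. grid N (V' j)" using V' g grid_diff grid_ind by simp
  have nu': "\<forall>j\<ge>1. - D \<le> V' j"
  proof (intro allI impI)
    fix j :: nat assume j: "j \<ge> 1"
    have e: "V' j = V j - ind (w < V j - V (Suc j)) N" using V' j by simp
    show "- D \<le> V' j"
    proof (cases "w < V j - V (Suc j)")
      case True
      then have "V (Suc j) < V j" using w by linarith
      then have "V (Suc j) + 1 / real N \<le> V j" using grid_lt[OF N g g] by blast
      then show ?thesis using e True nu[of "Suc j"] by (simp add: ind_def)
    next
      case False then show ?thesis using e nu[OF j] by (simp add: ind_def)
    qed
  qed
  have mu': "\<forall>j m. 1 \<le> j \<longrightarrow> j \<le> m \<longrightarrow> V' m - V' j \<le> D"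
  proof (intro allI impI)
    fix j m :: nat assume j: "1 \<le> j" and jm: "j \<le> m"
    have e: "V' m = V m - ind (w < V m - V (Suc m)) N" "V' j = V j - ind (w < V j - V (Suc j)) N"
      using V' j jm by auto
    show "V' m - V' j \<le> D"
    proof (cases "w < V j - V (Suc j) \<and> \<not> w < V m - V (Suc m)")
      case False
      then have "ind (w < V j - V (Suc j)) N - ind (w < V m - V (Suc m)) N \<le> 0"
        by (auto simp: ind_def)
      then show ?thesis using e mu[OF j jm] by linarith
    next
      case True
      have "V (Suc m) - V (Suc j) \<le> D" using mu[of "Suc j" "Suc m"] jm by simp
      then have lt: "V m - V j < D" using True by linarith
      have "V m - V j + 1 / real N \<le> D"
        using grid_lt[OF N grid_diff[OF g g] gD lt] .
      then show ?thesis using e True by (simp add: ind_def)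
    qed
  qed
  have s1': "\<forall>j. V' j - V' (Suc j) \<le> 1"
  proof
    fix j :: nat
    show "V' j - V' (Suc j) \<le> 1"
    proof (cases "j = 0")
      case True then show ?thesis using V'0 by simp
    next
      case False
      then have j: "j \<ge> 1" by simp
      have e: "V' j = V j - ind (w < V j - V (Suc j)) N"
        "V' (Suc j) = V (Suc j) - ind (w < V (Suc j) - V (Suc (Suc j))) N"
        using V' j by auto
      show ?thesis
      proof (cases "w < V (Suc j) - V (Suc (Suc j)) \<and> \<not> w < V j - V (Suc j)")
        case True
        then have lt: "V j - V (Suc j) < V (Suc j) - V (Suc (Suc j))" by linarith
        have "V (Suc j) - V (Suc (Suc j)) \<le> 1" using s1 by simp
        then have "V j - V (Suc j) + 1 / real N \<le> 1"
          using grid_lt[OF N grid_diff[OF g g] grid_diff[OF g g] lt] by linarith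
        then show ?thesis using e True by (simp add: ind_def)
      next
        case False
        then have "ind (w < V (Suc j) - V (Suc (Suc j))) N - ind (w < V j - V (Suc j)) N \<le> 0"
          by (auto simp: ind_def)
        then show ?thesis using e s1[of j] by linarith
      qed
    qed
  qed
  show ?thesis unfolding INV_def using V'0 g' nu' mu' s1' by blast
qed

lemma LC:
  assumes inv: "INV N D V" and gD: "grid N D" and N: "N > 0"
    and V'0: "V' 0 = V' 1 + 1"
    and V': "\<forall>j\<ge>1. V' j = V j - ind (\<exists>m\<ge>j. V m > 0) N"
  shows "INV N D V'"
proof -
  have g: "\<And>j. grid N (V j)" using INV_grid_all[OF inv N] .
  have s1: "\<And>j. V j - V (Suc j) \<le> 1" and s0: "V 0 = V 1 + 1" using inv by (auto simp: INV_def)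
  have mu: "\<And>j m. 1 \<le> j \<Longrightarrow> j \<le> m \<Longrightarrow> V m - V j \<le> D" using inv by (auto simp: INV_def)
  have nu: "\<And>j. 1 \<le> j \<Longrightarrow> - D \<le> V j" using inv by (auto simp: INV_def)
  have g': "\<forall>j\<ge>1. grid N (V' j)" using V' g grid_diff grid_ind by simp
  have mono: "\<And>j m. j \<le> m \<Longrightarrow> (\<exists>k\<ge>m. V k > 0) \<Longrightarrow> (\<exists>k\<ge>j. V k > 0)"
    by (meson order_trans)
  have nu': "\<forall>j\<ge>1. - D \<le> V' j"
  proof (intro allI impI)
    fix j :: nat assume j: "j \<ge> 1"
    have e: "V' j = V j - ind (\<exists>m\<ge>j. V m > 0) N" using V' j by simp
    show "- D \<le> V' j"
    proof (cases "\<exists>m\<ge>j. V m > 0")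
      case True
      then obtain m where m: "m \<ge> j" "V m > 0" by blast
      then have "0 + 1 / real N \<le> V m" using grid_lt[OF N grid_zero g] by blast
      moreover have "V m - V j \<le> D" using mu[OF j m(1)] .
      ultimately show ?thesis using e True by (simp add: ind_def)
    next
      case False
      then have "ind (\<exists>m\<ge>j. V m > 0) N = 0" by (simp only: ind_def if_False)
      then show ?thesis using e nu[OF j] by simp
    qed
  qed
  have mu': "\<forall>j m. 1 \<le> j \<longrightarrow> j \<le> m \<longrightarrow> V' m - V' j \<le> D"
  proof (intro allI impI)
    fix j m :: nat assume j: "1 \<le> j" and jm: "j \<le> m"
    have e: "V' m = V m - ind (\<exists>k\<ge>m. V k > 0) N" "V' j = V j - ind (\<exists>k\<ge>j. V k > 0) N"
      using V' j jm by auto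
    show "V' m - V' j \<le> D"
    proof (cases "(\<exists>k\<ge>j. V k > 0) \<and> \<not> (\<exists>k\<ge>m. V k > 0)")
      case True
      then obtain k where k: "k \<ge> j" "V k > 0" by blast
      have "V m \<le> 0" using True by auto
      moreover have "V k - V j \<le> D" using mu[OF j k(1)] .
      ultimately have lt: "V m - V j < D" using k by linarith
      have "V m - V j + 1 / real N \<le> D"
        using grid_lt[OF N grid_diff[OF g g] gD lt] .
      moreover have "ind (\<exists>k\<ge>j. V k > 0) N = 1 / real N" "ind (\<exists>k\<ge>m. V k > 0) N = 0"
        using True by (simp_all only: ind_def if_True if_False)
      ultimately show ?thesis using e by linarith
    next
      case False
      then have "ind (\<exists>k\<ge>j. V k > 0) N - ind (\<exists>k\<ge>m. V k > 0) N \<le> 0"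
        by (auto simp: ind_def)
      then show ?thesis using e mu[OF j jm] by linarith
    qed
  qed
  have s1': "\<forall>j. V' j - V' (Suc j) \<le> 1"
  proof
    fix j :: nat
    show "V' j - V' (Suc j) \<le> 1"
    proof (cases "j = 0")
      case True then show ?thesis using V'0 by simp
    next
      case False
      then have j: "j \<ge> 1" by simp
      have e: "V' j = V j - ind (\<exists>k\<ge>j. V k > 0) N"
        "V' (Suc j) = V (Suc j) - ind (\<exists>k\<ge>Suc j. V k > 0) N"
        using V' j by auto
      have "ind (\<exists>k\<ge>j. V k > 0) N - ind (\<exists>k\<ge>Suc j. V k > 0) N \<ge> 0"
        using mono[of j "Suc j"] by (auto simp: ind_def)
      then show ?thesis using e s1[of j] by linarith
    qed
  qed
  show ?thesis unfolding INV_def using V'0 g' nu' mu' s1' by blast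
qed

lemma INV_s1: "INV N D V \<Longrightarrow> V j - V (Suc j) \<le> 1"
  by (simp add: INV_def)

lemma ind_cases_le:
  "\<not> (P \<and> \<not> Q) \<Longrightarrow> ind P N - ind Q N \<le> 0"
  "P \<and> \<not> Q \<Longrightarrow> ind P N - ind Q N = 1 / real N"
  by (auto simp: ind_def)

lemma LB:
  assumes inv: "INV N D V" and N: "N \<ge> 2" and lam: "0 \<le> lam" and p: "0 \<le> p" "p \<le> 1"
    and V'0: "V' 0 = V' 1 + 1"
    and V': "\<forall>j\<ge>1. V' j = V j + ind (aI lam V u j) N - ind (lI lam p V u j) N - ind (cI lam p V u j) N"
  shows "INV N (D + 3 / real N) V'"
proof -
  have N0: "N > 0" using N by simp
  have g: "\<And>j. grid N (V j)" using INV_grid_all[OF inv N0] .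
  have s1: "\<And>j. V j - V (Suc j) \<le> 1" and s0: "V 0 = V 1 + 1" using inv by (auto simp: INV_def)
  have mu: "\<And>j m. 1 \<le> j \<Longrightarrow> j \<le> m \<Longrightarrow> V m - V j \<le> D" using inv by (auto simp: INV_def)
  have nu: "\<And>j. 1 \<le> j \<Longrightarrow> - D \<le> V j" using inv by (auto simp: INV_def)
  let ?ia = "\<lambda>j. ind (aI lam V u j) N" and ?il = "\<lambda>j. ind (lI lam p V u j) N"
    and ?ic = "\<lambda>j. ind (cI lam p V u j) N"
  have b: "\<And>P. 0 \<le> ind P N" "\<And>P. ind P N \<le> 1 / real N" by (simp_all add: ind_nonneg ind_le)
  have g': "\<forall>j\<ge>1. grid N (V' j)" using V' g grid_diff grid_add grid_ind by simp
  have nu': "\<forall>j\<ge>1. - (D + 3 / real N) \<le> V' j"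
  proof (intro allI impI)
    fix j :: nat assume j: "1 \<le> j"
    have "V' j = V j + ?ia j - ?il j - ?ic j" using V' j by simp
    then show "- (D + 3 / real N) \<le> V' j"
      using nu[OF j] b[of "aI lam V u j"] b[of "lI lam p V u j"] b[of "cI lam p V u j"] by linarith
  qed
  have mu': "\<forall>j m. 1 \<le> j \<longrightarrow> j \<le> m \<longrightarrow> V' m - V' j \<le> D + 3 / real N"
  proof (intro allI impI)
    fix j m :: nat assume j: "1 \<le> j" and jm: "j \<le> m"
    have "V' m = V m + ?ia m - ?il m - ?ic m" "V' j = V j + ?ia j - ?il j - ?ic j" using V' j jm by auto
    then show "V' m - V' j \<le> D + 3 / real N"
      using mu[OF j jm] b[of "aI lam V u j"] b[of "lI lam p V u j"] b[of "cI lam p V u j"]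
        b[of "aI lam V u m"] b[of "lI lam p V u m"] b[of "cI lam p V u m"] by linarith
  qed
  have cc0: "0 \<le> lam / (1 + lam)" using lam by simp
  have ee0: "0 \<le> (1 - p) / (1 + lam)" using lam p by simp
  have s1': "\<forall>j. V' j - V' (Suc j) \<le> 1"
  proof
    fix j :: nat
    show "V' j - V' (Suc j) \<le> 1"
    proof (cases "j = 0")
      case True then show ?thesis using V'0 by simp
    next
      case False
      then have j: "j \<ge> 1" by simp
      have e: "V' j = V j + ?ia j - ?il j - ?ic j" "V' (Suc j) = V (Suc j) + ?ia (Suc j) - ?il (Suc j) - ?ic (Suc j)"
        using V' j by auto
      have cm: "cI lam p V u (Suc j) \<Longrightarrow> cI lam p V u j" using j
        by (auto simp: cI_def) (meson Suc_leD order_trans)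
      have C: "?ic (Suc j) - ?ic j \<le> 0" using cm by (auto simp: ind_def)
      have Fa: "V j - V (Suc j) < V (j - 1) - V j" if Pa: "aI lam V u j \<and> \<not> aI lam V u (Suc j)"
      proof -
        obtain y where y: "0 \<le> y" "y < V (j - 1) - V j" "u = lam / (1 + lam) * y"
          using Pa[THEN conjunct1] unfolding aI_def by auto
        have "\<not> y < V j - V (Suc j)"
        proof
          assume "y < V j - V (Suc j)"
          then have "aI lam V u (Suc j)" unfolding aI_def using y by auto
          then show False using Pa by simp
        qed
        then show ?thesis using y by linarith
      qed
      have Fl: "V j - V (Suc j) < V (Suc j) - V (Suc (Suc j))" if Pl: "lI lam p V u (Suc j) \<and> \<not> lI lam p V u j"
      proof -
        obtain z where z: "0 \<le> z" "z < V (Suc j) - V (Suc (Suc j))" "u = lam / (1 + lam) + (1 - p) / (1 + lam) * z"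
          using Pl[THEN conjunct1] unfolding lI_def by auto
        have "\<not> z < V j - V (Suc j)"
        proof
          assume "z < V j - V (Suc j)"
          then have "lI lam p V u j" unfolding lI_def using z j by auto
          then show False using Pl by simp
        qed
        then show ?thesis using z by linarith
      qed
      have Fb: "V j - V (Suc j) \<le> 0" if Pb: "aI lam V u j \<and> \<not> aI lam V u (Suc j)" "lI lam p V u (Suc j) \<and> \<not> lI lam p V u j"
      proof -
        obtain y where y: "0 \<le> y" "y < V (j - 1) - V j" "u = lam / (1 + lam) * y"
          using Pb(1)[THEN conjunct1] unfolding aI_def by auto
        obtain z where z: "0 \<le> z" "u = lam / (1 + lam) + (1 - p) / (1 + lam) * z"
          using Pb(2)[THEN conjunct1] unfolding lI_def by auto
        have y1: "y < 1" using y(2) s1[of "j - 1"] j by simp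
        have cc: "lam / (1 + lam) = 0"
        proof (rule ccontr)
          assume "lam / (1 + lam) \<noteq> 0"
          then have pos: "lam / (1 + lam) > 0" using cc0 by linarith
          have "lam / (1 + lam) * y < lam / (1 + lam) * 1" using y1 pos by (rule mult_strict_left_mono)
          moreover have "0 \<le> (1 - p) / (1 + lam) * z" using ee0 z(1) by (rule mult_nonneg_nonneg)
          ultimately show False using y(3) z(2) by linarith
        qed
        then have u0: "u = 0" using y(3) by (metis mult_zero_left)
        show ?thesis
        proof (rule ccontr)
          assume "\<not> V j - V (Suc j) \<le> 0"
          then have "aI lam V u (Suc j)" unfolding aI_def using u0 cc
            by (auto intro!: image_eqI[of _ _ 0])
          then show False using Pb by simp
        qed
      qed
      have gs: "\<And>k. grid N (V k - V (Suc k))" using grid_diff[OF g g] .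
      have key: "(?ia j - ?ia (Suc j)) + (?il (Suc j) - ?il j) \<le> 1 - (V j - V (Suc j))"
      proof (cases "aI lam V u j \<and> \<not> aI lam V u (Suc j)")
        case A: True
        show ?thesis
        proof (cases "lI lam p V u (Suc j) \<and> \<not> lI lam p V u j")
          case True
          have "V j - V (Suc j) \<le> 0" using Fb A True by blast
          moreover have "2 / real N \<le> 1" using N by simp
          moreover have "?ia j - ?ia (Suc j) = 1 / real N" "?il (Suc j) - ?il j = 1 / real N"
            using A True ind_cases_le(2) by blast+
          ultimately show ?thesis by linarith
        next
          case False
          have "V j - V (Suc j) + 1 / real N \<le> V (j - 1) - V j" using grid_lt[OF N0 gs grid_diff[OF g g] Fa[OF A]]
            using j by simp
          moreover have "V (j - 1) - V j \<le> 1" using s1[of "j - 1"] j by simp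
          moreover have "?ia j - ?ia (Suc j) = 1 / real N" using A ind_cases_le(2) by blast
          moreover have "?il (Suc j) - ?il j \<le> 0" using False ind_cases_le(1) by blast
          ultimately show ?thesis by linarith
        qed
      next
        case A: False
        have ia: "?ia j - ?ia (Suc j) \<le> 0" using A ind_cases_le(1) by blast
        show ?thesis
        proof (cases "lI lam p V u (Suc j) \<and> \<not> lI lam p V u j")
          case True
          have "V j - V (Suc j) + 1 / real N \<le> V (Suc j) - V (Suc (Suc j))" using grid_lt[OF N0 gs gs Fl[OF True]] .
          moreover have "V (Suc j) - V (Suc (Suc j)) \<le> 1" using s1 by simp
          moreover have "?il (Suc j) - ?il j = 1 / real N" using True ind_cases_le(2) by blast
          ultimately show ?thesis using ia by linarith
        next
          case False
          have "?il (Suc j) - ?il j \<le> 0" using False ind_cases_le(1) by blast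
          then show ?thesis using ia s1[of j] by linarith
        qed
      qed
      show ?thesis using e key C by linarith
    qed
  qed
  show ?thesis unfolding INV_def using V'0 g' nu' mu' s1' by blast
qed

lemma LG:
  assumes inv: "INV N D V" and gD: "grid N D" and N0: "N > 0" and lam: "0 \<le> lam" and p: "0 \<le> p" "p \<le> 1"
    and u: "0 \<le> u" "u \<le> 1" "u \<noteq> 0" "u \<noteq> lam / (1 + lam)"
    and V'0: "V' 0 = V' 1 + 1"
    and V': "\<forall>j\<ge>1. V' j = V j + ind (aI lam V u j) N - ind (lI lam p V u j) N - ind (cI lam p V u j) N"
  shows "INV N D V'"
proof -
  define cc where "cc = lam / (1 + lam)"
  define ee where "ee = (1 - p) / (1 + lam)"
  define qq where "qq = p / (1 + lam)"
  have l1: "1 + lam > 0" using lam by simp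
  have "cc + ee = (lam + (1 - p)) / (1 + lam)" unfolding cc_def ee_def by (simp add: add_divide_distrib)
  also have "\<dots> = ((1 + lam) - p) / (1 + lam)" by (simp add: algebra_simps)
  also have "\<dots> = (1 + lam) / (1 + lam) - p / (1 + lam)" by (rule diff_divide_distrib)
  also have "\<dots> = 1 - qq" unfolding qq_def using l1 by simp
  finally have sum: "1 - qq = cc + ee" by simp
  have cc0: "0 \<le> cc" unfolding cc_def using lam by simp
  have ee0: "0 \<le> ee" unfolding ee_def using lam p by simp
  have s1: "\<And>j. V j - V (Suc j) \<le> 1" using inv by (simp add: INV_def)
  have aIb: "u \<le> cc" if H: "aI lam V u j" for j
  proof -
    obtain y where y: "0 \<le> y" "y < V (j - 1) - V j" "u = cc * y" "j \<ge> 1"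
      using H unfolding aI_def cc_def by auto
    have "y \<le> 1" using y(2) s1[of "j - 1"] y(4) by simp
    then have "cc * y \<le> cc * 1" using cc0 by (rule mult_left_mono)
    then show ?thesis using y by simp
  qed
  have lIb: "cc \<le> u \<and> (u < cc + ee \<or> u = cc)" if H: "lI lam p V u j" for j
  proof -
    obtain z where z: "0 \<le> z" "z < V j - V (Suc j)" "u = cc + ee * z"
      using H unfolding lI_def cc_def ee_def by auto
    have z1: "z < 1" using z(2) s1[of j] by simp
    have "0 \<le> ee * z" using ee0 z(1) by (rule mult_nonneg_nonneg)
    moreover have "ee = 0 \<or> ee * z < ee * 1"
      using ee0 z1 mult_strict_left_mono[of z 1 ee] by linarith
    ultimately show ?thesis using z by auto
  qed
  have cIb: "1 - qq \<le> u \<and> u < 1" if "cI lam p V u j" for j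
    using that unfolding cI_def qq_def by auto
  have ucc: "u \<noteq> cc" using u(4) unfolding cc_def .
  show ?thesis
  proof (cases "u < cc")
    case True
    then have ccp: "cc > 0" using u(1) by simp
    have nl: "\<And>j. \<not> lI lam p V u j" using lIb True by fastforce
    have nc: "\<And>j. \<not> cI lam p V u j" using cIb True sum ee0 by fastforce
    have ea: "aI lam V u j \<longleftrightarrow> u / cc < V (j - 1) - V j" if "j \<ge> 1" for j
    proof
      assume "aI lam V u j"
      then obtain y where y: "0 \<le> y" "y < V (j - 1) - V j" "u = cc * y"
        unfolding aI_def cc_def by auto
      then show "u / cc < V (j - 1) - V j" using ccp by simp
    next
      assume a: "u / cc < V (j - 1) - V j"
      have "u = cc * (u / cc)" using ccp by simp
      moreover have "0 \<le> u / cc" using u(1) ccp by simp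
      ultimately show "aI lam V u j" unfolding aI_def cc_def[symmetric] using a that
        by (auto intro!: image_eqI[of _ _ "u / cc"])
    qed
    show ?thesis
    proof (rule LA[OF inv gD N0 V'0])
      show "\<forall>j\<ge>1. V' j = V j + ind (u / cc < V (j - 1) - V j) N"
        using V' nl nc ea by (simp add: ind_def)
    qed
  next
    case False
    then have gcc: "cc < u" using ucc by simp
    have na: "\<And>j. \<not> aI lam V u j" using aIb gcc by fastforce
    show ?thesis
    proof (cases "u < 1 - qq")
      case True
      then have eep: "ee > 0" using gcc sum by simp
      have nc: "\<And>j. \<not> cI lam p V u j" using cIb True by fastforce
      have el: "lI lam p V u j \<longleftrightarrow> (u - cc) / ee < V j - V (Suc j)" if "j \<ge> 1" for j
      proof
        assume "lI lam p V u j"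
        then obtain z where z: "0 \<le> z" "z < V j - V (Suc j)" "u = cc + ee * z"
          unfolding lI_def cc_def ee_def by auto
        then show "(u - cc) / ee < V j - V (Suc j)" using eep by simp
      next
        assume a: "(u - cc) / ee < V j - V (Suc j)"
        have "u = cc + ee * ((u - cc) / ee)" using eep by simp
        moreover have "0 \<le> (u - cc) / ee" using gcc eep by simp
        ultimately show "lI lam p V u j" unfolding lI_def cc_def[symmetric] ee_def[symmetric] using a that
          by (auto intro!: image_eqI[of _ _ "(u - cc) / ee"])
      qed
      show ?thesis
      proof (rule LL[OF inv gD N0 _ V'0])
        show "0 \<le> (u - cc) / ee" using gcc eep by simp
        show "\<forall>j\<ge>1. V' j = V j - ind ((u - cc) / ee < V j - V (Suc j)) N"
          using V' na nc el by (simp add: ind_def)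
      qed
    next
      case False
      then have uq: "1 - qq \<le> u" by simp
      have nl: "\<And>j. \<not> lI lam p V u j" using lIb uq sum gcc by fastforce
      show ?thesis
      proof (cases "u < 1")
        case True
        have ec: "cI lam p V u j \<longleftrightarrow> (\<exists>m\<ge>j. V m > 0)" if "j \<ge> 1" for j
          using that True uq unfolding cI_def qq_def by auto
        show ?thesis
        proof (rule LC[OF inv gD N0 V'0])
          show "\<forall>j\<ge>1. V' j = V j - ind (\<exists>m\<ge>j. V m > 0) N"
            using V' na nl ec by (simp add: ind_def)
        qed
      next
        case False
        have nc: "\<And>j. \<not> cI lam p V u j" using cIb False by fastforce
        show ?thesis
        proof (rule LA[OF inv gD N0 V'0])
          have "\<not> 1 < V (j - 1) - V j" for j
            using s1[of "j - 1"] by (cases j) simp_all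
          then show "\<forall>j\<ge>1. V' j = V j + ind (1 < V (j - 1) - V j) N"
            using V' na nl nc by (simp add: ind_def)
        qed
      qed
    qed
  qed
qed

definition Bc :: "real \<Rightarrow> (nat \<Rightarrow> real) \<Rightarrow> nat \<Rightarrow> nat" where
  "Bc lam U k = card {m \<in> {1..k}. U m = 0 \<or> U m = lam / (1 + lam)}"

lemma Bc_Suc: "Bc lam U (Suc k) = Bc lam U k + (if U (Suc k) = 0 \<or> U (Suc k) = lam / (1 + lam) then 1 else 0)"
proof -
  have e: "{m \<in> {1..Suc k}. U m = 0 \<or> U m = lam / (1 + lam)} =
      (if U (Suc k) = 0 \<or> U (Suc k) = lam / (1 + lam) then insert (Suc k) {m \<in> {1..k}. U m = 0 \<or> U m = lam / (1 + lam)}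
       else {m \<in> {1..k}. U m = 0 \<or> U m = lam / (1 + lam)})"
    by (auto simp: le_Suc_eq)
  show ?thesis unfolding Bc_def e by simp
qed

lemma INV_traj:
  assumes N: "N \<ge> 2" and lam: "0 \<le> lam" and p: "0 \<le> p" "p \<le> 1"
    and U: "\<forall>k\<ge>1. 0 \<le> U k \<and> U k \<le> 1"
    and init: "INV N 0 (V_of V0 (\<lambda>_. 0, \<lambda>_. 0, \<lambda>_. 0))"
  shows "INV N (3 * real (Bc lam U k) / real N) (Vk lam p N V0 U k)"
proof (induction k)
  case 0 then show ?case using init by (simp add: Bc_def)
next
  case (Suc k)
  have N0: "N > 0" using N by simp
  let ?st = "counters_after lam p N V0 U k"
  have eq: "Vk lam p N V0 U (Suc k) = V_of V0 (step lam p N V0 (U (Suc k)) ?st)" by simp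
  have V'0: "Vk lam p N V0 U (Suc k) 0 = Vk lam p N V0 U (Suc k) 1 + 1" by (rule V_of_0)
  have V': "\<forall>j\<ge>1. Vk lam p N V0 U (Suc k) j = Vk lam p N V0 U k j + ind (aI lam (Vk lam p N V0 U k) (U (Suc k)) j) N
      - ind (lI lam p (Vk lam p N V0 U k) (U (Suc k)) j) N - ind (cI lam p (Vk lam p N V0 U k) (U (Suc k)) j) N"
    using V_of_step by (simp only: eq) blast
  have u: "0 \<le> U (Suc k)" "U (Suc k) \<le> 1" using U by auto
  show ?case
  proof (cases "U (Suc k) = 0 \<or> U (Suc k) = lam / (1 + lam)")
    case True
    have "INV N (3 * real (Bc lam U k) / real N + 3 / real N) (Vk lam p N V0 U (Suc k))"
      using LB[OF Suc.IH N lam p V'0 V'] .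
    moreover have "3 * real (Bc lam U (Suc k)) / real N = 3 * real (Bc lam U k) / real N + 3 / real N"
      using True by (simp add: Bc_Suc add_divide_distrib algebra_simps)
    ultimately show ?thesis by simp
  next
    case False
    have gD: "grid N (3 * real (Bc lam U k) / real N)" unfolding grid_def
      by (rule exI[of _ "3 * int (Bc lam U k)"]) simp
    have "INV N (3 * real (Bc lam U k) / real N) (Vk lam p N V0 U (Suc k))"
      using LG[OF Suc.IH gD N0 lam p u _ _ V'0 V'] False by blast
    then show ?thesis using False by (simp add: Bc_Suc)
  qed
qed

lemma Vbar_props:
  assumes "V \<in> Vbar_inf"
  shows "V 0 = V 1 + 1" "\<And>i. 0 \<le> V i" "\<And>i. 0 \<le> V i - V (Suc i)" "\<And>i. V i - V (Suc i) \<le> 1"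
proof -
  obtain s where s: "s \<in> Sbar_inf" "\<And>i. V i = (\<Sum>j. s (j + i))" using assms unfolding Vbar_inf_def by blast
  have sS: "\<And>i. 0 \<le> s i \<and> s i \<le> 1" "s 0 = 1" and sm: "summable (\<lambda>i. s (Suc i))"
    using s(1) unfolding Sbar_inf_def S_set_def by auto
  have sm0: "summable s" using sm summable_Suc_iff by blast
  have smi: "\<And>i. summable (\<lambda>j. s (j + i))" using sm0 summable_iff_shift by blast
  have split: "V (Suc i) = V i - s i" for i
  proof -
    have "(\<Sum>n. s (Suc n + i)) = (\<Sum>n. s (n + i)) - s (0 + i)"
      using suminf_split_head[OF smi[of i]] by simp
    then show ?thesis using s(2)[of i] s(2)[of "Suc i"] by simp
  qed
  show "V 0 = V 1 + 1" using split[of 0] sS(2) by simp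
  show "\<And>i. 0 \<le> V i" unfolding s(2) using smi sS(1) by (simp add: suminf_nonneg)
  show "\<And>i. 0 \<le> V i - V (Suc i)" using split sS(1) by simp
  show "\<And>i. V i - V (Suc i) \<le> 1" using split sS(1) by simp
qed

lemma INV_init:
  assumes "V \<in> Vbar_inf" "\<forall>i. \<exists>m::nat. V i = real m / real N"
  shows "INV N 0 (V_of V (\<lambda>_. 0, \<lambda>_. 0, \<lambda>_. 0))"
proof -
  note vp = Vbar_props[OF assms(1)]
  have e: "V_of V (\<lambda>_. 0, \<lambda>_. 0, \<lambda>_. 0) = V"
    using vp(1) by (auto simp: V_of_def fun_eq_iff)
  have mono: "V m \<le> V j" if "j \<le> m" for j m
    using that
  proof (induction m rule: dec_induct)
    case base then show ?case by simp
  next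
    case (step m) then show ?case using vp(3)[of m] by linarith
  qed
  have g: "grid N (V j)" for j
  proof -
    obtain m :: nat where "V j = real m / real N" using assms(2) by blast
    then show ?thesis unfolding grid_def by (intro exI[of _ "int m"]) simp
  qed
  show ?thesis unfolding e INV_def using vp mono g by auto
qed

lemma XV_0:
  assumes "counting_path W" "V0 N \<in> Vbar_inf"
  shows "XV lam p W U V0 N 0 = V0 N"
proof -
  have "W 0 = 0" using assms(1) unfolding counting_path_def by simp
  then show ?thesis using Vbar_props(1)[OF assms(2)]
    by (auto simp: XV_def V_of_def fun_eq_iff)
qed

lemma wnorm_coord: "ennreal (sqrt ((1/2)^i) * \<bar>x i\<bar>) \<le> wnorm x"
proof (cases "summable (\<lambda>i. (1/2)^i * (x i)^2)")
  case True
  have "(\<Sum>k\<in>{i}. (1/2::real)^k * (x k)^2) \<le> (\<Sum>k. (1/2)^k * (x k)^2)"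
    by (rule sum_le_suminf[OF True]) auto
  then have "(1/2::real)^i * (x i)^2 \<le> (\<Sum>k. (1/2)^k * (x k)^2)" by simp
  then have "sqrt ((1/2::real)^i * (x i)^2) \<le> sqrt (\<Sum>k. (1/2)^k * (x k)^2)" by simp
  moreover have "sqrt ((1/2::real)^i * (x i)^2) = sqrt ((1/2)^i) * \<bar>x i\<bar>"
    by (simp add: real_sqrt_mult)
  ultimately show ?thesis using True by (simp add: wnorm_def ennreal_leI)
next
  case False then show ?thesis by (simp add: wnorm_def)
qed

lemma dZ_coord:
  assumes "s \<in> {0..T}"
  shows "ennreal (sqrt ((1/2)^i) * \<bar>X s i - v s i\<bar>) \<le> dZ T X v"
proof -
  have "ennreal (sqrt ((1/2)^i) * \<bar>X s i - v s i\<bar>) \<le> wnorm (\<lambda>i. X s i - v s i)"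
    using wnorm_coord[of i "\<lambda>i. X s i - v s i"] by simp
  also have "\<dots> \<le> dZ T X v" unfolding dZ_def using assms by (rule SUP_upper)
  finally show ?thesis .
qed

lemma ennreal_tendsto0_real:
  assumes le: "\<And>n. ennreal (f n) \<le> g n" and g: "g \<longlonglongrightarrow> 0" and nn: "\<And>n. 0 \<le> f n"
  shows "f \<longlonglongrightarrow> 0"
proof (rule order_tendstoI)
  fix a :: real assume "a < 0"
  then show "\<forall>\<^sub>F n in sequentially. a < f n" using nn by (intro always_eventually) (auto intro: less_le_trans)
next
  fix a :: real assume a: "0 < a"
  have "\<forall>\<^sub>F n in sequentially. g n < ennreal a"
    using order_tendstoD(2)[OF g] a by simp
  then show "\<forall>\<^sub>F n in sequentially. f n < a"
  proof (rule eventually_mono)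
    fix n assume "g n < ennreal a"
    then have "ennreal (f n) < ennreal a" using le[of n] by (rule le_less_trans[rotated])
    then show "f n < a" using nn[of n] by (simp add: ennreal_less_iff)
  qed
qed

lemma conv_pt:
  assumes lim: "(\<lambda>n. dZ T (X n) v) \<longlonglongrightarrow> 0" and s: "s \<in> {0..T}"
  shows "(\<lambda>n. X n s i) \<longlonglongrightarrow> v s i"
proof -
  have c: "sqrt ((1/2::real)^i) > 0" by simp
  have "(\<lambda>n. sqrt ((1/2)^i) * \<bar>X n s i - v s i\<bar>) \<longlonglongrightarrow> 0"
    by (rule ennreal_tendsto0_real[OF dZ_coord[OF s] lim]) simp
  then have "(\<lambda>n. (sqrt ((1/2)^i) * \<bar>X n s i - v s i\<bar>) / sqrt ((1/2)^i)) \<longlonglongrightarrow> 0 / sqrt ((1/2)^i)"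
    by (rule tendsto_divide) (use c in simp_all)
  then have "(\<lambda>n. \<bar>X n s i - v s i\<bar>) \<longlonglongrightarrow> 0" using c by simp
  then have "(\<lambda>n. X n s i - v s i) \<longlonglongrightarrow> 0" by (simp add: tendsto_rabs_zero_iff)
  then show ?thesis by (rule LIM_zero_cancel)
qed

lemma W_conv:
  assumes C_W: "(\<lambda>N. SUP s\<in>{0..T}. ennreal \<bar>real (W (real N * s)) / real N - (1 + lam) * s\<bar>) \<longlonglongrightarrow> 0"
    and s: "s \<in> {0..T}" and r: "strict_mono r"
  shows "(\<lambda>n. real (W (real (r n) * s)) / real (r n)) \<longlonglongrightarrow> (1 + lam) * s"
proof -
  have "(\<lambda>N. \<bar>real (W (real N * s)) / real N - (1 + lam) * s\<bar>) \<longlonglongrightarrow> 0"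
    by (rule ennreal_tendsto0_real[OF _ C_W]) (use s in \<open>auto intro: SUP_upper\<close>)
  then have "(\<lambda>N. real (W (real N * s)) / real N - (1 + lam) * s) \<longlonglongrightarrow> 0"
    by (simp add: tendsto_rabs_zero_iff)
  then have "(\<lambda>N. real (W (real N * s)) / real N) \<longlonglongrightarrow> (1 + lam) * s"
    by (rule LIM_zero_cancel)
  from LIMSEQ_subseq_LIMSEQ[OF this r] show ?thesis by (simp add: o_def)
qed

lemma le_by_small:
  fixes x y c :: real
  assumes "c > 0" "\<And>\<eta>. 0 < \<eta> \<Longrightarrow> \<eta> < c \<Longrightarrow> x \<le> y + \<eta>"
  shows "x \<le> y"
proof (rule ccontr)
  assume nxy: "\<not> x \<le> y"
  define \<eta> where "\<eta> = min (c / 2) ((x - y) / 2)"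
  have h: "0 < \<eta>" "\<eta> < c" using assms(1) nxy unfolding \<eta>_def by auto
  have h3: "\<eta> \<le> (x - y) / 2" unfolding \<eta>_def by (rule min.cobounded2)
  have "x \<le> y + \<eta>" using assms(2)[OF h(1) h(2)] .
  then show False using h3 nxy by argo
qed

lemma card_blk_split:
  fixes K0 K1 :: nat
  assumes "K0 \<le> K1"
  shows "real (card {k \<in> {K0<..K1}. P k}) = real (card {k \<in> {1..K1}. P k}) - real (card {k \<in> {1..K0}. P k})"
proof -
  have u: "{k \<in> {1..K1}. P k} = {k \<in> {1..K0}. P k} \<union> {k \<in> {K0<..K1}. P k}"
  proof (rule set_eqI)
    fix x show "x \<in> {k \<in> {1..K1}. P k} \<longleftrightarrow> x \<in> {k \<in> {1..K0}. P k} \<union> {k \<in> {K0<..K1}. P k}"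
      using assms by (cases "x \<le> K0") auto
  qed
  have d: "{k \<in> {1..K0}. P k} \<inter> {k \<in> {K0<..K1}. P k} = {}" by auto
  have "card {k \<in> {1..K1}. P k} = card {k \<in> {1..K0}. P k} + card {k \<in> {K0<..K1}. P k}"
    unfolding u by (rule card_Un_disjoint) (use d in auto)
  then show ?thesis by simp
qed

lemma LLN_K:
  assumes C_U: "\<forall>a b. 0 \<le> a \<and> a < b \<and> b \<le> 1 \<longrightarrow>
               (\<lambda>N. real (card {k \<in> {1..N}. a \<le> U k \<and> U k < b}) / real N) \<longlonglongrightarrow> b - a"
    and ab: "0 \<le> a" "a < b" "b \<le> 1"
    and K: "filterlim K at_top sequentially"
    and KN: "(\<lambda>n. real (K n) / real (Nn n)) \<longlonglongrightarrow> L"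
  shows "(\<lambda>n. real (card {k \<in> {1..K n}. a \<le> U k \<and> U k < b}) / real (Nn n)) \<longlonglongrightarrow> (b - a) * L"
proof -
  let ?c = "\<lambda>N. real (card {k \<in> {1..N}. a \<le> U k \<and> U k < b})"
  have "(\<lambda>N. ?c N / real N) \<longlonglongrightarrow> b - a" using C_U ab by blast
  then have "(\<lambda>n. ?c (K n) / real (K n)) \<longlonglongrightarrow> b - a"
    using K by (rule filterlim_compose)
  then have lim: "(\<lambda>n. ?c (K n) / real (K n) * (real (K n) / real (Nn n))) \<longlonglongrightarrow> (b - a) * L"
    using KN by (rule tendsto_mult)
  have eq: "?c (K n) / real (K n) * (real (K n) / real (Nn n)) = ?c (K n) / real (Nn n)" for n
  proof (cases "K n = 0")
    case True then show ?thesis by simp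
  next
    case False
    then have "real (K n) \<noteq> 0" by simp
    have "?c (K n) / real (K n) * (real (K n) / real (Nn n)) = (?c (K n) * real (K n)) / (real (K n) * real (Nn n))"
      by simp
    also have "\<dots> = ?c (K n) / real (Nn n)" using \<open>real (K n) \<noteq> 0\<close>
      by (simp add: mult.commute[of "?c (K n)"])
    finally show ?thesis .
  qed
  show ?thesis using lim by (simp only: eq)
qed

lemma K_at_top:
  assumes KN: "(\<lambda>n. real (K n) / real (r n)) \<longlonglongrightarrow> L" and L: "L > 0" and r: "strict_mono r"
  shows "filterlim K at_top sequentially"
proof -
  have rt: "filterlim (\<lambda>n. real (r n)) at_top sequentially"
    using filterlim_compose[OF filterlim_real_sequentially filterlim_subseq[OF r]] by (simp add: o_def)
  have "filterlim (\<lambda>n. real (K n) / real (r n) * real (r n)) at_top sequentially"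
    by (rule filterlim_tendsto_pos_mult_at_top[OF KN L rt])
  moreover have ev: "\<forall>\<^sub>F n in sequentially. real (K n) / real (r n) * real (r n) = real (K n)"
  proof (rule eventually_sequentiallyI[of 1])
    fix n :: nat assume "1 \<le> n"
    then have "r n \<ge> 1" using seq_suble[OF r, of n] by simp
    then show "real (K n) / real (r n) * real (r n) = real (K n)" by simp
  qed
  ultimately have "filterlim (\<lambda>n. real (K n)) at_top sequentially"
    using filterlim_cong[OF refl refl ev] by simp
  then show ?thesis by (simp add: filterlim_sequentially_iff_filterlim_real)
qed

lemma le_by_small2:
  fixes x y c K :: real
  assumes "c > 0" "K \<ge> 0" "\<And>\<eta>. 0 < \<eta> \<Longrightarrow> \<eta> < c \<Longrightarrow> x \<le> y + K * \<eta>"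
  shows "x \<le> y"
proof (rule ccontr)
  assume nxy: "\<not> x \<le> y"
  define \<eta> where "\<eta> = min (c / 2) ((x - y) / (2 * (K + 1)))"
  have K1: "K + 1 > 0" using assms(2) by simp
  have h: "0 < \<eta>" "\<eta> < c" using assms(1) nxy K1 unfolding \<eta>_def by (auto simp: field_simps)
  have h3: "\<eta> \<le> (x - y) / (2 * (K + 1))" unfolding \<eta>_def by (rule min.cobounded2)
  have "K * \<eta> \<le> K * ((x - y) / (2 * (K + 1)))" using h3 assms(2) by (rule mult_left_mono)
  also have "\<dots> < x - y"
  proof -
    have "K * ((x - y) / (2 * (K + 1))) = (x - y) * (K / (2 * (K + 1)))" by simp
    also have "\<dots> < (x - y) * 1"
      using nxy K1 assms(2) by (intro mult_strict_left_mono) (auto simp: field_simps)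
    finally show ?thesis by simp
  qed
  finally have "K * \<eta> < x - y" .
  moreover have "x \<le> y + K * \<eta>" using assms(3)[OF h(1) h(2)] .
  ultimately show False by argo
qed

lemma RL:
  fixes Nn K0 K1 :: "nat \<Rightarrow> nat" and U :: "nat \<Rightarrow> real" and Dk :: "nat \<Rightarrow> nat \<Rightarrow> real"
    and dn \<delta>n :: "nat \<Rightarrow> real"
  assumes LLN: "\<And>a b. 0 \<le> a \<Longrightarrow> a < b \<Longrightarrow> b \<le> 1 \<Longrightarrow>
      (\<lambda>n. real (card {k \<in> {K0 n<..K1 n}. a \<le> U k \<and> U k < b}) / real (Nn n)) \<longlonglongrightarrow> (b - a) * R"
    and tot: "(\<lambda>n. real (card {K0 n<..K1 n}) / real (Nn n)) \<longlonglongrightarrow> R"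
    and Ur: "\<forall>k\<ge>1. 0 \<le> U k \<and> U k \<le> 1"
    and pars: "0 \<le> \<alpha>" "\<alpha> < 1" "0 \<le> e" "\<alpha> + e \<le> 1" "0 \<le> R" "0 \<le> d" "d \<le> 1" "0 \<le> \<delta>"
    and dev: "\<And>n k. k \<in> {K0 n<..K1 n} \<Longrightarrow> \<bar>Dk n k - dn n\<bar> \<le> \<delta>n n"
    and dn: "dn \<longlonglongrightarrow> d" and \<delta>n: "\<delta>n \<longlonglongrightarrow> \<delta>"
    and X: "(\<lambda>n. real (card {k \<in> {K0 n<..K1 n}. U k \<in> (\<lambda>y. \<alpha> + e * y) ` {0..<Dk n k}}) / real (Nn n)) \<longlonglongrightarrow> X"
  shows "X \<le> R * e * (d + \<delta>)" "R * e * (d - \<delta>) \<le> X"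
proof -
  let ?cX = "\<lambda>n. real (card {k \<in> {K0 n<..K1 n}. U k \<in> (\<lambda>y. \<alpha> + e * y) ` {0..<Dk n k}})"
  let ?cI = "\<lambda>a b n. real (card {k \<in> {K0 n<..K1 n}. a \<le> U k \<and> U k < b})"
  have Nnn: "\<And>n. 0 \<le> 1 / real (Nn n)" by simp
  have divle: "\<And>x y n. x \<le> y \<Longrightarrow> x / real (Nn n) \<le> y / real (Nn n)"
    by (simp add: divide_right_mono)
  have Uk: "\<And>n k. k \<in> {K0 n<..K1 n} \<Longrightarrow> 0 \<le> U k \<and> U k \<le> 1" using Ur by auto
  show "X \<le> R * e * (d + \<delta>)"
  proof (rule le_by_small2[of 1 "R * (e + 1)"])
    show "0 \<le> R * (e + 1)" using pars by simp
    fix \<eta> :: real assume \<eta>: "0 < \<eta>" "\<eta> < 1"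
    define \<beta> where "\<beta> = \<alpha> + e * (d + \<delta> + \<eta>) + \<eta>"
    have "(\<lambda>n. dn n + \<delta>n n) \<longlonglongrightarrow> d + \<delta>" using dn \<delta>n by (rule tendsto_add)
    then have ev: "\<forall>\<^sub>F n in sequentially. dn n + \<delta>n n < d + \<delta> + \<eta>"
      using \<eta> by (intro order_tendstoD(2)) auto
    have sub: "{k \<in> {K0 n<..K1 n}. U k \<in> (\<lambda>y. \<alpha> + e * y) ` {0..<Dk n k}} \<subseteq> {k \<in> {K0 n<..K1 n}. \<alpha> \<le> U k \<and> U k < \<beta>}"
      if "dn n + \<delta>n n < d + \<delta> + \<eta>" for n
    proof
      fix k assume "k \<in> {k \<in> {K0 n<..K1 n}. U k \<in> (\<lambda>y. \<alpha> + e * y) ` {0..<Dk n k}}"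
      then obtain y where k: "k \<in> {K0 n<..K1 n}" and y: "0 \<le> y" "y < Dk n k" "U k = \<alpha> + e * y" by auto
      have "Dk n k \<le> dn n + \<delta>n n" using dev[OF k] by linarith
      then have "y \<le> d + \<delta> + \<eta>" using y that by linarith
      then have "e * y \<le> e * (d + \<delta> + \<eta>)" using pars(3) by (rule mult_left_mono)
      moreover have "0 \<le> e * y" using pars(3) y(1) by simp
      ultimately show "k \<in> {k \<in> {K0 n<..K1 n}. \<alpha> \<le> U k \<and> U k < \<beta>}" using k y \<eta> unfolding \<beta>_def by auto
    qed
    have evc: "\<forall>\<^sub>F n in sequentially. ?cX n \<le> ?cI \<alpha> \<beta> n"
      using ev by eventually_elim (use sub in \<open>simp add: card_mono\<close>)
    have "X \<le> (\<beta> - \<alpha>) * R"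
    proof (cases "\<beta> \<le> 1")
      case True
      have "0 \<le> e * (d + \<delta> + \<eta>)" using pars \<eta> by simp
      then have "\<alpha> < \<beta>" unfolding \<beta>_def using \<eta> by simp
      with True have L: "(\<lambda>n. ?cI \<alpha> \<beta> n / real (Nn n)) \<longlonglongrightarrow> (\<beta> - \<alpha>) * R" using LLN pars by simp
      have "\<forall>\<^sub>F n in sequentially. ?cX n / real (Nn n) \<le> ?cI \<alpha> \<beta> n / real (Nn n)"
        using evc by eventually_elim (simp add: divle)
      then show ?thesis using tendsto_le[OF _ L X] by simp
    next
      case False
      define Z where "Z = (\<lambda>n. if \<alpha> > 0 then ?cI 0 \<alpha> n else 0)"
      have LZ: "(\<lambda>n. Z n / real (Nn n)) \<longlonglongrightarrow> \<alpha> * R"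
      proof (cases "\<alpha> > 0")
        case True then show ?thesis unfolding Z_def using LLN[of 0 \<alpha>] pars by simp
      next
        case False then show ?thesis unfolding Z_def using pars by simp
      qed
      have L: "(\<lambda>n. real (card {K0 n<..K1 n}) / real (Nn n) - Z n / real (Nn n)) \<longlonglongrightarrow> R - \<alpha> * R"
        using tot LZ by (rule tendsto_diff)
      have bnd: "?cI \<alpha> \<beta> n \<le> real (card {K0 n<..K1 n}) - Z n" for n
      proof -
        have d: "{k \<in> {K0 n<..K1 n}. \<alpha> \<le> U k \<and> U k < \<beta>} \<inter> {k \<in> {K0 n<..K1 n}. 0 \<le> U k \<and> U k < \<alpha>} = {}" by auto
        have "card {k \<in> {K0 n<..K1 n}. \<alpha> \<le> U k \<and> U k < \<beta>} + card {k \<in> {K0 n<..K1 n}. 0 \<le> U k \<and> U k < \<alpha>}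
            = card ({k \<in> {K0 n<..K1 n}. \<alpha> \<le> U k \<and> U k < \<beta>} \<union> {k \<in> {K0 n<..K1 n}. 0 \<le> U k \<and> U k < \<alpha>})"
          by (rule card_Un_disjoint[symmetric]) (use d in auto)
        also have "\<dots> \<le> card {K0 n<..K1 n}" by (rule card_mono) auto
        finally have "?cI \<alpha> \<beta> n + ?cI 0 \<alpha> n \<le> real (card {K0 n<..K1 n})"
          by (simp only: of_nat_add[symmetric] of_nat_le_iff)
        moreover have "?cI \<alpha> \<beta> n \<le> real (card {K0 n<..K1 n})"
          unfolding of_nat_le_iff by (rule card_mono) auto
        ultimately show ?thesis unfolding Z_def by auto
      qed
      have "X \<le> R - \<alpha> * R"
      proof (rule tendsto_le[OF _ L X])
        show "\<forall>\<^sub>F n in sequentially. ?cX n / real (Nn n) \<le> real (card {K0 n<..K1 n}) / real (Nn n) - Z n / real (Nn n)"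
          using evc
        proof eventually_elim
          case (elim n)
          have "?cX n \<le> real (card {K0 n<..K1 n}) - Z n" using elim bnd[of n] by linarith
          then have "?cX n / real (Nn n) \<le> (real (card {K0 n<..K1 n}) - Z n) / real (Nn n)" by (rule divle)
          then show ?case by (simp add: diff_divide_distrib)
        qed
      qed simp
      moreover have "(1 - \<alpha>) * R \<le> (\<beta> - \<alpha>) * R" using False pars by (intro mult_right_mono) auto
      moreover have "(1 - \<alpha>) * R = R - \<alpha> * R" by (simp add: algebra_simps)
      ultimately show ?thesis by linarith
    qed
    also have "(\<beta> - \<alpha>) * R = R * e * (d + \<delta>) + R * (e + 1) * \<eta>" unfolding \<beta>_def by (simp add: algebra_simps)
    finally show "X \<le> R * e * (d + \<delta>) + R * (e + 1) * \<eta>" .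
  qed simp
  have X0: "0 \<le> X" by (rule tendsto_lowerbound[OF X]) simp_all
  show "R * e * (d - \<delta>) \<le> X"
  proof (cases "e > 0 \<and> d - \<delta> > 0")
    case False
    have Re: "0 \<le> R * e" using pars by simp
    have "R * e * (d - \<delta>) \<le> 0"
    proof (cases "e = 0")
      case True then show ?thesis by simp
    next
      case False
      then have "d - \<delta> \<le> 0" using \<open>\<not> (e > 0 \<and> d - \<delta> > 0)\<close> pars by auto
      with Re show ?thesis by (rule mult_nonneg_nonpos)
    qed
    then show ?thesis using X0 by linarith
  next
    case True
    then have ep: "e > 0" and dd: "d - \<delta> > 0" by auto
    show ?thesis
    proof (rule le_by_small2[of "d - \<delta>" "R * e"])
      show "0 < d - \<delta>" using dd .
      show "0 \<le> R * e" using pars by simp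
      fix \<eta> :: real assume \<eta>: "0 < \<eta>" "\<eta> < d - \<delta>"
      define \<beta> where "\<beta> = \<alpha> + e * (d - \<delta> - \<eta>)"
      have "(\<lambda>n. dn n - \<delta>n n) \<longlonglongrightarrow> d - \<delta>" using dn \<delta>n by (rule tendsto_diff)
      then have ev: "\<forall>\<^sub>F n in sequentially. d - \<delta> - \<eta> < dn n - \<delta>n n"
        using \<eta> by (intro order_tendstoD(1)) auto
      have ab: "\<alpha> < \<beta>" unfolding \<beta>_def using ep \<eta> by simp
      have b1: "\<beta> \<le> 1"
      proof -
        have "e * (d - \<delta> - \<eta>) \<le> e * 1" using pars \<eta> by (intro mult_left_mono) auto
        then show ?thesis unfolding \<beta>_def using pars by linarith
      qed
      have sub: "{k \<in> {K0 n<..K1 n}. \<alpha> \<le> U k \<and> U k < \<beta>} \<subseteq> {k \<in> {K0 n<..K1 n}. U k \<in> (\<lambda>y. \<alpha> + e * y) ` {0..<Dk n k}}"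
        if "d - \<delta> - \<eta> < dn n - \<delta>n n" for n
      proof
        fix k assume "k \<in> {k \<in> {K0 n<..K1 n}. \<alpha> \<le> U k \<and> U k < \<beta>}"
        then have k: "k \<in> {K0 n<..K1 n}" and u: "\<alpha> \<le> U k" "U k < \<beta>" by auto
        define y where "y = (U k - \<alpha>) / e"
        have y0: "0 \<le> y" unfolding y_def using u ep by simp
        have "U k - \<alpha> < e * (d - \<delta> - \<eta>)" using u unfolding \<beta>_def by simp
        then have "y < d - \<delta> - \<eta>" unfolding y_def using ep by (simp add: divide_less_eq mult.commute)
        moreover have "dn n - \<delta>n n \<le> Dk n k" using dev[OF k] by linarith
        ultimately have yD: "y < Dk n k" using that by linarith
        have "U k = \<alpha> + e * y" unfolding y_def using ep by simp
        then show "k \<in> {k \<in> {K0 n<..K1 n}. U k \<in> (\<lambda>y. \<alpha> + e * y) ` {0..<Dk n k}}"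
          using k y0 yD by auto
      qed
      have evc: "\<forall>\<^sub>F n in sequentially. ?cI \<alpha> \<beta> n \<le> ?cX n"
        using ev by eventually_elim (use sub in \<open>simp add: card_mono\<close>)
      have L: "(\<lambda>n. ?cI \<alpha> \<beta> n / real (Nn n)) \<longlonglongrightarrow> (\<beta> - \<alpha>) * R" using LLN pars ab b1 by simp
      have "\<forall>\<^sub>F n in sequentially. ?cI \<alpha> \<beta> n / real (Nn n) \<le> ?cX n / real (Nn n)"
        using evc by eventually_elim (simp add: divle)
      then have "(\<beta> - \<alpha>) * R \<le> X" using tendsto_le[OF _ X L] by simp
      then show "R * e * (d - \<delta>) \<le> X + R * e * \<eta>" unfolding \<beta>_def by (simp add: algebra_simps)
    qed
  qed
qed

lemma deriv_right_quot:
  assumes "(f has_real_derivative D) (at t)"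
  shows "((\<lambda>h. (f (t + h) - f t) / h) \<longlongrightarrow> D) (at_right 0)"
proof -
  have "((\<lambda>h. (f (t + h) - f t) / h) \<longlongrightarrow> D) (at 0)"
    using assms by (rule DERIV_D)
  then show ?thesis by (simp add: filterlim_at_split)
qed

lemma deriv_eq_from_bound:
  assumes D: "(f has_real_derivative D) (at t)" and h0: "h0 > 0" and C: "C \<ge> 0"
    and b: "\<And>h. 0 < h \<Longrightarrow> h < h0 \<Longrightarrow> \<bar>(f (t + h) - f t) - L * h\<bar> \<le> C * h * h"
  shows "D = L"
proof -
  have q: "((\<lambda>h. (f (t + h) - f t) / h) \<longlongrightarrow> D) (at_right 0)" by (rule deriv_right_quot[OF D])
  have ev: "\<forall>\<^sub>F h in at_right 0. norm ((f (t + h) - f t) / h - L) \<le> C * h"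
  proof -
    have "\<forall>\<^sub>F h in at_right (0::real). 0 < h \<and> h < h0"
      using h0 by (simp add: eventually_at_right_field) (auto intro: exI[of _ h0])
    then show ?thesis
    proof eventually_elim
      case (elim h)
      have "(f (t + h) - f t) / h - L = ((f (t + h) - f t) - L * h) / h" using elim by (simp add: field_simps)
      then have "norm ((f (t + h) - f t) / h - L) = \<bar>(f (t + h) - f t) - L * h\<bar> / h" using elim by simp
      also have "\<dots> \<le> C * h * h / h" by (rule divide_right_mono) (use b[of h] elim in auto)
      also have "\<dots> = C * h" using elim by simp
      finally show ?case .
    qed
  qed
  have "((\<lambda>h. C * h) \<longlongrightarrow> 0) (at_right (0::real))"
    by (rule tendsto_eq_intros) (auto intro: tendsto_eq_intros)
  then have "((\<lambda>h. (f (t + h) - f t) / h - L) \<longlongrightarrow> 0) (at_right 0)"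
    by (rule Lim_null_comparison[OF ev])
  then have "((\<lambda>h. (f (t + h) - f t) / h) \<longlongrightarrow> L) (at_right 0)" by (rule LIM_zero_cancel)
  from tendsto_unique[OF _ q this] show ?thesis by simp
qed

lemma deriv_le_from_bound:
  assumes D: "(f has_real_derivative D) (at t)" and h0: "h0 > 0"
    and b: "\<And>h. 0 < h \<Longrightarrow> h < h0 \<Longrightarrow> f (t + h) - f t \<le> M * h"
  shows "D \<le> M"
proof -
  have q: "((\<lambda>h. (f (t + h) - f t) / h) \<longlongrightarrow> D) (at_right 0)" by (rule deriv_right_quot[OF D])
  have "\<forall>\<^sub>F h in at_right (0::real). 0 < h \<and> h < h0"
    using h0 by (simp add: eventually_at_right_field) (auto intro: exI[of _ h0])
  then have ev: "\<forall>\<^sub>F h in at_right (0::real). (f (t + h) - f t) / h \<le> M"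
  proof eventually_elim
    case (elim h)
    then show ?case using b[of h] by (simp add: divide_le_eq)
  qed
  show ?thesis by (rule tendsto_upperbound[OF q ev]) simp
qed

lemma RC_upper:
  fixes Nn K0 K1 :: "nat \<Rightarrow> nat" and U :: "nat \<Rightarrow> real"
  assumes LLN: "\<And>a b. 0 \<le> a \<Longrightarrow> a < b \<Longrightarrow> b \<le> 1 \<Longrightarrow>
      (\<lambda>n. real (card {k \<in> {K0 n<..K1 n}. a \<le> U k \<and> U k < b}) / real (Nn n)) \<longlonglongrightarrow> (b - a) * R"
    and q: "0 \<le> q" "q \<le> 1"
    and X: "(\<lambda>n. real (card {k \<in> {K0 n<..K1 n}. P n k}) / real (Nn n)) \<longlonglongrightarrow> X"
    and sub: "\<And>n k. k \<in> {K0 n<..K1 n} \<Longrightarrow> P n k \<Longrightarrow> 1 - q \<le> U k \<and> U k < 1"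
  shows "X \<le> q * R"
proof (cases "q = 0")
  case True
  then have "\<And>n. {k \<in> {K0 n<..K1 n}. P n k} = {}" using sub by force
  then have e: "\<And>n. real (card {k \<in> {K0 n<..K1 n}. P n k}) / real (Nn n) = 0" by simp
  have "X = 0" using X unfolding e by (simp add: LIMSEQ_const_iff)
  then show ?thesis using True by simp
next
  case False
  then have L: "(\<lambda>n. real (card {k \<in> {K0 n<..K1 n}. 1 - q \<le> U k \<and> U k < 1}) / real (Nn n)) \<longlonglongrightarrow> q * R"
    using LLN[of "1 - q" 1] q by simp
  have "\<And>n. real (card {k \<in> {K0 n<..K1 n}. P n k}) / real (Nn n) \<le> real (card {k \<in> {K0 n<..K1 n}. 1 - q \<le> U k \<and> U k < 1}) / real (Nn n)"
  proof -
    fix n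
    have "card {k \<in> {K0 n<..K1 n}. P n k} \<le> card {k \<in> {K0 n<..K1 n}. 1 - q \<le> U k \<and> U k < 1}"
      by (rule card_mono) (use sub in auto)
    then show "real (card {k \<in> {K0 n<..K1 n}. P n k}) / real (Nn n) \<le> real (card {k \<in> {K0 n<..K1 n}. 1 - q \<le> U k \<and> U k < 1}) / real (Nn n)"
      by (simp add: divide_right_mono)
  qed
  then show ?thesis using tendsto_le[OF _ L X] by simp
qed

lemma RC_exact:
  fixes Nn K0 K1 :: "nat \<Rightarrow> nat" and U :: "nat \<Rightarrow> real"
  assumes LLN: "\<And>a b. 0 \<le> a \<Longrightarrow> a < b \<Longrightarrow> b \<le> 1 \<Longrightarrow>
      (\<lambda>n. real (card {k \<in> {K0 n<..K1 n}. a \<le> U k \<and> U k < b}) / real (Nn n)) \<longlonglongrightarrow> (b - a) * R"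
    and q: "0 \<le> q" "q \<le> 1"
    and X: "(\<lambda>n. real (card {k \<in> {K0 n<..K1 n}. P n k}) / real (Nn n)) \<longlonglongrightarrow> X"
    and ev: "\<forall>\<^sub>F n in sequentially. \<forall>k \<in> {K0 n<..K1 n}. P n k \<longleftrightarrow> 1 - q \<le> U k \<and> U k < 1"
  shows "X = q * R"
proof (cases "q = 0")
  case True
  have "\<forall>\<^sub>F n in sequentially. real (card {k \<in> {K0 n<..K1 n}. P n k}) / real (Nn n) = 0"
    using ev by eventually_elim (use True in auto)
  then have "(\<lambda>n. real (card {k \<in> {K0 n<..K1 n}. P n k}) / real (Nn n)) \<longlonglongrightarrow> 0"
    by (rule tendsto_eventually)
  then have "X = 0" using X LIMSEQ_unique by blast
  then show ?thesis using True by simp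
next
  case False
  then have L: "(\<lambda>n. real (card {k \<in> {K0 n<..K1 n}. 1 - q \<le> U k \<and> U k < 1}) / real (Nn n)) \<longlonglongrightarrow> q * R"
    using LLN[of "1 - q" 1] q by simp
  have evq: "\<forall>\<^sub>F n in sequentially. real (card {k \<in> {K0 n<..K1 n}. 1 - q \<le> U k \<and> U k < 1}) / real (Nn n)
      = real (card {k \<in> {K0 n<..K1 n}. P n k}) / real (Nn n)"
    using ev by eventually_elim (metis (no_types, lifting) mem_Collect_eq Collect_cong)
  have "(\<lambda>n. real (card {k \<in> {K0 n<..K1 n}. P n k}) / real (Nn n)) \<longlonglongrightarrow> q * R"
    using Lim_transform_eventually[OF L evq] .
  then show ?thesis using X LIMSEQ_unique by blast
qed

locale P2ctx =
  fixes lam p T :: real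
    and W :: "real \<Rightarrow> nat"
    and U :: "nat \<Rightarrow> real"
    and V0 :: "nat \<Rightarrow> nat \<Rightarrow> real"
    and v0 :: "nat \<Rightarrow> real"
    and r :: "nat \<Rightarrow> nat"
    and v a l c :: "real \<Rightarrow> nat \<Rightarrow> real"
    and t :: real
  assumes lam: "0 \<le> lam" "lam < 1"
    and p: "0 \<le> p" "p \<le> 1"
    and T: "T > 0"
    and W_path: "counting_path W"
    and U_range: "\<forall>k\<ge>1. 0 \<le> U k \<and> U k \<le> 1"
    and V0_space: "\<forall>N\<ge>1. V0 N \<in> Vbar_inf \<and> (\<forall>i. \<exists>m::nat. V0 N i = real m / real N)"
    and C_W: "(\<lambda>N. SUP s\<in>{0..T}. ennreal \<bar>real (W (real N * s)) / real N - (1 + lam) * s\<bar>)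
               \<longlonglongrightarrow> 0"
    and C_U: "\<forall>a b. 0 \<le> a \<and> a < b \<and> b \<le> 1 \<longrightarrow>
               (\<lambda>N. real (card {k \<in> {1..N}. a \<le> U k \<and> U k < b}) / real N) \<longlonglongrightarrow> b - a"
    and v0_space: "v0 \<in> Vbar_inf"
    and init: "(\<lambda>N. wnorm (\<lambda>i. V0 N i - v0 i)) \<longlonglongrightarrow> 0"
    and lip: "\<forall>i. (\<exists>K. K-lipschitz_on {0..T} (\<lambda>s. v s i)) \<and> (\<exists>K. K-lipschitz_on {0..T} (\<lambda>s. a s i))
                 \<and> (\<exists>K. K-lipschitz_on {0..T} (\<lambda>s. l s i)) \<and> (\<exists>K. K-lipschitz_on {0..T} (\<lambda>s. c s i))"
    and subseq: "strict_mono r"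
    and limV: "(\<lambda>n. dZ T (XV lam p W U V0 (r n)) v) \<longlonglongrightarrow> 0"
    and limA: "(\<lambda>n. dZ T (XA lam p W U V0 (r n)) a) \<longlonglongrightarrow> 0"
    and limL: "(\<lambda>n. dZ T (XL lam p W U V0 (r n)) l) \<longlonglongrightarrow> 0"
    and limC: "(\<lambda>n. dZ T (XC lam p W U V0 (r n)) c) \<longlonglongrightarrow> 0"
    and t: "t \<in> {0<..<T}"
    and diff: "\<forall>i. (\<lambda>s. v s i) differentiable (at t) \<and> (\<lambda>s. a s i) differentiable (at t)
                 \<and> (\<lambda>s. l s i) differentiable (at t) \<and> (\<lambda>s. c s i) differentiable (at t)"
begin

lemma r_ge: "r n \<ge> n" using seq_suble[OF subseq] .

lemma ev_r: "\<forall>\<^sub>F n in sequentially. r n \<ge> m"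
  by (rule eventually_sequentiallyI[of m]) (use r_ge le_trans in blast)

lemma convV: "s \<in> {0..T} \<Longrightarrow> (\<lambda>n. XV lam p W U V0 (r n) s i) \<longlonglongrightarrow> v s i"
  by (rule conv_pt[OF limV])
lemma convA: "s \<in> {0..T} \<Longrightarrow> (\<lambda>n. XA lam p W U V0 (r n) s i) \<longlonglongrightarrow> a s i"
  by (rule conv_pt[OF limA])
lemma convL: "s \<in> {0..T} \<Longrightarrow> (\<lambda>n. XL lam p W U V0 (r n) s i) \<longlonglongrightarrow> l s i"
  by (rule conv_pt[OF limL])
lemma convC: "s \<in> {0..T} \<Longrightarrow> (\<lambda>n. XC lam p W U V0 (r n) s i) \<longlonglongrightarrow> c s i"
  by (rule conv_pt[OF limC])

lemma V0_conv: "(\<lambda>n. V0 (r n) i) \<longlonglongrightarrow> v0 i"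
proof -
  have c: "sqrt ((1/2::real)^i) > 0" by simp
  have "(\<lambda>N. sqrt ((1/2)^i) * \<bar>V0 N i - v0 i\<bar>) \<longlonglongrightarrow> 0"
    by (rule ennreal_tendsto0_real[OF _ init]) (use wnorm_coord[of i] in auto)
  then have "(\<lambda>N. (sqrt ((1/2)^i) * \<bar>V0 N i - v0 i\<bar>) / sqrt ((1/2)^i)) \<longlonglongrightarrow> 0 / sqrt ((1/2)^i)"
    by (rule tendsto_divide) (use c in simp_all)
  then have "(\<lambda>N. \<bar>V0 N i - v0 i\<bar>) \<longlonglongrightarrow> 0" using c by simp
  then have "(\<lambda>N. V0 N i - v0 i) \<longlonglongrightarrow> 0" by (simp add: tendsto_rabs_zero_iff)
  then have "(\<lambda>N. V0 N i) \<longlonglongrightarrow> v0 i" by (rule LIM_zero_cancel)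
  from LIMSEQ_subseq_LIMSEQ[OF this subseq] show ?thesis by (simp add: o_def)
qed

lemma v_init: "v 0 = v0"
proof
  fix i
  have ev: "\<forall>\<^sub>F n in sequentially. V0 (r n) i = XV lam p W U V0 (r n) 0 i"
    using ev_r[of 1]
  proof eventually_elim
    case (elim n)
    then have "V0 (r n) \<in> Vbar_inf" using V0_space by simp
    then show ?case using XV_0[OF W_path] by simp
  qed
  have "(\<lambda>n. XV lam p W U V0 (r n) 0 i) \<longlonglongrightarrow> v0 i"
    using Lim_transform_eventually[OF V0_conv ev] .
  moreover have "(\<lambda>n. XV lam p W U V0 (r n) 0 i) \<longlonglongrightarrow> v 0 i" using convV T by simp
  ultimately show "v 0 i = v0 i" using LIMSEQ_unique by blast
qed

lemma XV_01: "XV lam p W U V0 N s 0 - XV lam p W U V0 N s 1 = 1"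
  unfolding XV_def using V_of_0 by simp

lemma v_01: assumes "s \<in> {0..T}" shows "v s 0 - v s 1 = 1"
proof -
  have "(\<lambda>n. XV lam p W U V0 (r n) s 0 - XV lam p W U V0 (r n) s 1) \<longlonglongrightarrow> v s 0 - v s 1"
    using convV[OF assms, of 0] convV[OF assms, of 1] by (rule tendsto_diff)
  then show ?thesis using XV_01 by (simp add: LIMSEQ_const_iff)
qed

lemma XV_id: "i \<ge> 1 \<Longrightarrow> XV lam p W U V0 N s i = V0 N i + XA lam p W U V0 N s i - XL lam p W U V0 N s i - XC lam p W U V0 N s i"
  unfolding XV_def XA_def XL_def XC_def V_of_def by (simp split: prod.split)

lemma v_id: assumes "s \<in> {0..T}" "i \<ge> 1" shows "v s i = v0 i + a s i - l s i - c s i"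
proof -
  have "(\<lambda>n. V0 (r n) i + XA lam p W U V0 (r n) s i - XL lam p W U V0 (r n) s i - XC lam p W U V0 (r n) s i)
      \<longlonglongrightarrow> v0 i + a s i - l s i - c s i"
    by (intro tendsto_diff tendsto_add V0_conv convA convL convC assms)
  then have "(\<lambda>n. XV lam p W U V0 (r n) s i) \<longlonglongrightarrow> v0 i + a s i - l s i - c s i"
    using XV_id[OF assms(2)] by simp
  then show ?thesis using convV[OF assms(1)] LIMSEQ_unique by blast
qed

lemma cc_lt: "lam / (1 + lam) < 1 / 2"
  using lam by (simp add: field_simps)

lemma KN_conv: "s \<in> {0..T} \<Longrightarrow> (\<lambda>n. real (W (real (r n) * s)) / real (r n)) \<longlonglongrightarrow> (1 + lam) * s"
  by (rule W_conv[OF C_W _ subseq])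

lemma K_top: "s \<in> {0<..T} \<Longrightarrow> filterlim (\<lambda>n. W (real (r n) * s)) at_top sequentially"
  by (rule K_at_top[OF KN_conv _ subseq]) (use lam in auto)

lemma LLN_at: assumes "s \<in> {0<..T}" "0 \<le> a'" "a' < b'" "b' \<le> 1"
  shows "(\<lambda>n. real (card {k \<in> {1..W (real (r n) * s)}. a' \<le> U k \<and> U k < b'}) / real (r n)) \<longlonglongrightarrow> (b' - a') * ((1 + lam) * s)"
  by (rule LLN_K[OF C_U assms(2-4) K_top[OF assms(1)] KN_conv]) (use assms(1) in auto)

lemma Bc_conv: assumes s: "s \<in> {0<..T}"
  shows "(\<lambda>n. 3 * real (Bc lam U (W (real (r n) * s))) / real (r n)) \<longlonglongrightarrow> 0"
proof (rule order_tendstoI)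
  fix x :: real assume "x < 0"
  then show "\<forall>\<^sub>F n in sequentially. x < 3 * real (Bc lam U (W (real (r n) * s))) / real (r n)"
    by (intro always_eventually) (auto intro: less_le_trans)
next
  fix x :: real assume x: "0 < x"
  define M where "M = 3 * 2 * ((1 + lam) * s)"
  have M: "M > 0" unfolding M_def using s lam by simp
  define \<epsilon> where "\<epsilon> = min (1/2) (x / (2 * M))"
  have e: "0 < \<epsilon>" "\<epsilon> \<le> 1/2" "\<epsilon> \<le> x / (2 * M)" unfolding \<epsilon>_def using x M by auto
  let ?cc = "lam / (1 + lam)"
  have cc0: "0 \<le> ?cc" using lam by simp
  let ?f = "\<lambda>n. real (card {k \<in> {1..W (real (r n) * s)}. 0 \<le> U k \<and> U k < \<epsilon>}) / real (r n)"
  let ?g = "\<lambda>n. real (card {k \<in> {1..W (real (r n) * s)}. ?cc \<le> U k \<and> U k < ?cc + \<epsilon>}) / real (r n)"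
  have f: "?f \<longlonglongrightarrow> (\<epsilon> - 0) * ((1 + lam) * s)" by (rule LLN_at[OF s]) (use e in auto)
  have cce: "?cc + \<epsilon> \<le> 1" using e(2) cc_lt by linarith
  have g: "?g \<longlonglongrightarrow> (?cc + \<epsilon> - ?cc) * ((1 + lam) * s)"
    by (rule LLN_at[OF s cc0 _ cce]) (use e in auto)
  have lim: "(\<lambda>n. 3 * (?f n + ?g n)) \<longlonglongrightarrow> 3 * ((\<epsilon> - 0) * ((1 + lam) * s) + (?cc + \<epsilon> - ?cc) * ((1 + lam) * s))"
    by (intro tendsto_mult tendsto_const tendsto_add f g)
  have eqM: "3 * ((\<epsilon> - 0) * ((1 + lam) * s) + (?cc + \<epsilon> - ?cc) * ((1 + lam) * s)) = \<epsilon> * M"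
    unfolding M_def by (simp add: algebra_simps)
  have lim2: "(\<lambda>n. 3 * (?f n + ?g n)) \<longlonglongrightarrow> \<epsilon> * M" using lim unfolding eqM .
  moreover have "\<epsilon> * M < x"
  proof -
    have "\<epsilon> * M \<le> x / (2 * M) * M" using e(3) M by (intro mult_right_mono) auto
    also have "\<dots> = x / 2" using M by simp
    finally show ?thesis using x by simp
  qed
  ultimately have "\<forall>\<^sub>F n in sequentially. 3 * (?f n + ?g n) < x" by (rule order_tendstoD(2))
  then show "\<forall>\<^sub>F n in sequentially. 3 * real (Bc lam U (W (real (r n) * s))) / real (r n) < x"
  proof eventually_elim
    case (elim n)
    let ?K = "W (real (r n) * s)"
    have sub: "{m \<in> {1..?K}. U m = 0 \<or> U m = ?cc} \<subseteq> {k \<in> {1..?K}. 0 \<le> U k \<and> U k < \<epsilon>} \<union> {k \<in> {1..?K}. ?cc \<le> U k \<and> U k < ?cc + \<epsilon>}"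
      using e(1) by auto
    have "Bc lam U ?K \<le> card ({k \<in> {1..?K}. 0 \<le> U k \<and> U k < \<epsilon>} \<union> {k \<in> {1..?K}. ?cc \<le> U k \<and> U k < ?cc + \<epsilon>})"
      unfolding Bc_def by (rule card_mono[OF _ sub]) simp
    also have "\<dots> \<le> card {k \<in> {1..?K}. 0 \<le> U k \<and> U k < \<epsilon>} + card {k \<in> {1..?K}. ?cc \<le> U k \<and> U k < ?cc + \<epsilon>}"
      by (rule card_Un_le)
    finally have "real (Bc lam U ?K) \<le> real (card {k \<in> {1..?K}. 0 \<le> U k \<and> U k < \<epsilon>}) + real (card {k \<in> {1..?K}. ?cc \<le> U k \<and> U k < ?cc + \<epsilon>})"
      by linarith
    then have "3 * real (Bc lam U ?K) / real (r n) \<le> 3 * (real (card {k \<in> {1..?K}. 0 \<le> U k \<and> U k < \<epsilon>}) + real (card {k \<in> {1..?K}. ?cc \<le> U k \<and> U k < ?cc + \<epsilon>})) / real (r n)"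
      by (simp add: divide_right_mono)
    also have "\<dots> = 3 * (?f n + ?g n)" by (simp add: add_divide_distrib)
    finally show ?case using elim by linarith
  qed
qed

end

context P2ctx begin

lemma INV_at: "\<forall>\<^sub>F n in sequentially. INV (r n) (3 * real (Bc lam U (W (real (r n) * s))) / real (r n)) (XV lam p W U V0 (r n) s)"
  using ev_r[of 2]
proof eventually_elim
  case (elim n)
  have sp: "V0 (r n) \<in> Vbar_inf" "\<forall>i. \<exists>m::nat. V0 (r n) i = real m / real (r n)" using V0_space elim by auto
  have "INV (r n) (3 * real (Bc lam U (W (real (r n) * s))) / real (r n)) (Vk lam p (r n) (V0 (r n)) U (W (real (r n) * s)))"
    by (rule INV_traj[OF elim lam(1) p U_range INV_init[OF sp]])
  then show ?case unfolding XV_def .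
qed

lemma v_inv:
  assumes s: "s \<in> {0<..T}"
  shows "\<And>j. j \<ge> 1 \<Longrightarrow> 0 \<le> v s j" "\<And>j. j \<ge> 1 \<Longrightarrow> v s (Suc j) \<le> v s j" "\<And>j. v s j - v s (Suc j) \<le> 1"
proof -
  let ?D = "\<lambda>n. 3 * real (Bc lam U (W (real (r n) * s))) / real (r n)"
  have D: "?D \<longlonglongrightarrow> 0" by (rule Bc_conv[OF s])
  have s': "s \<in> {0..T}" using s by auto
  show "0 \<le> v s j" if j: "j \<ge> 1" for j
  proof -
    have "\<forall>\<^sub>F n in sequentially. - ?D n \<le> XV lam p W U V0 (r n) s j"
      using INV_at[of s] by eventually_elim (use j in \<open>simp add: INV_def\<close>)
    moreover have "(\<lambda>n. - ?D n) \<longlonglongrightarrow> - 0" using D by (rule tendsto_minus)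
    ultimately show ?thesis using tendsto_le[OF _ convV[OF s'] ] by simp
  qed
  show "v s (Suc j) \<le> v s j" if j: "j \<ge> 1" for j
  proof -
    have "\<forall>\<^sub>F n in sequentially. XV lam p W U V0 (r n) s (Suc j) - XV lam p W U V0 (r n) s j \<le> ?D n"
      using INV_at[of s] by eventually_elim (use j in \<open>simp add: INV_def\<close>)
    moreover have L: "(\<lambda>n. XV lam p W U V0 (r n) s (Suc j) - XV lam p W U V0 (r n) s j) \<longlonglongrightarrow> v s (Suc j) - v s j"
      using convV[OF s'] convV[OF s'] by (rule tendsto_diff)
    ultimately have "v s (Suc j) - v s j \<le> 0" using tendsto_le[OF _ D L] by simp
    then show ?thesis by simp
  qed
  show "v s j - v s (Suc j) \<le> 1" for j
  proof -
    have "\<forall>\<^sub>F n in sequentially. XV lam p W U V0 (r n) s j - XV lam p W U V0 (r n) s (Suc j) \<le> 1"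
      using INV_at[of s] by eventually_elim (simp add: INV_def)
    moreover have "(\<lambda>n. XV lam p W U V0 (r n) s j - XV lam p W U V0 (r n) s (Suc j)) \<longlonglongrightarrow> v s j - v s (Suc j)"
      using convV[OF s'] convV[OF s'] by (rule tendsto_diff)
    ultimately show ?thesis using tendsto_upperbound by (metis trivial_limit_sequentially)
  qed
qed

end

context P2ctx begin

abbreviation "K0 n \<equiv> W (real (r n) * t)"
abbreviation "K1 h n \<equiv> W (real (r n) * (t + h))"

lemma t_in: "t \<in> {0..T}" "t \<in> {0<..T}" using t by auto

lemma blk_mono: assumes "0 < h" shows "K0 n \<le> K1 h n"
proof -
  have m: "mono_on {0..} W" using W_path unfolding counting_path_def by blast
  have "real (r n) * t \<le> real (r n) * (t + h)" using assms by (simp add: mult_left_mono)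
  moreover have "0 \<le> real (r n) * t" using t by simp
  ultimately show ?thesis using m by (auto intro: mono_onD)
qed

lemma blk_LLN:
  assumes h: "0 < h" "h < T - t" and ab: "0 \<le> a'" "a' < b'" "b' \<le> 1"
  shows "(\<lambda>n. real (card {k \<in> {K0 n<..K1 h n}. a' \<le> U k \<and> U k < b'}) / real (r n)) \<longlonglongrightarrow> (b' - a') * ((1 + lam) * h)"
proof -
  have th: "t + h \<in> {0<..T}" using h t by auto
  have L1: "(\<lambda>n. real (card {k \<in> {1..K1 h n}. a' \<le> U k \<and> U k < b'}) / real (r n)) \<longlonglongrightarrow> (b' - a') * ((1 + lam) * (t + h))"
    by (rule LLN_at[OF th ab])
  have L0: "(\<lambda>n. real (card {k \<in> {1..K0 n}. a' \<le> U k \<and> U k < b'}) / real (r n)) \<longlonglongrightarrow> (b' - a') * ((1 + lam) * t)"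
    by (rule LLN_at[OF t_in(2) ab])
  have "(\<lambda>n. real (card {k \<in> {1..K1 h n}. a' \<le> U k \<and> U k < b'}) / real (r n) - real (card {k \<in> {1..K0 n}. a' \<le> U k \<and> U k < b'}) / real (r n))
      \<longlonglongrightarrow> (b' - a') * ((1 + lam) * (t + h)) - (b' - a') * ((1 + lam) * t)"
    using L1 L0 by (rule tendsto_diff)
  moreover have "(b' - a') * ((1 + lam) * (t + h)) - (b' - a') * ((1 + lam) * t) = (b' - a') * ((1 + lam) * h)"
    by (simp add: algebra_simps)
  moreover have "real (card {k \<in> {K0 n<..K1 h n}. a' \<le> U k \<and> U k < b'}) / real (r n) =
      real (card {k \<in> {1..K1 h n}. a' \<le> U k \<and> U k < b'}) / real (r n) - real (card {k \<in> {1..K0 n}. a' \<le> U k \<and> U k < b'}) / real (r n)" for n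
    using card_blk_split[OF blk_mono[OF h(1)], of n] by (simp add: diff_divide_distrib)
  ultimately show ?thesis by simp
qed

lemma blk_tot:
  assumes h: "0 < h" "h < T - t"
  shows "(\<lambda>n. real (card {K0 n<..K1 h n}) / real (r n)) \<longlonglongrightarrow> (1 + lam) * h"
proof -
  have th: "t + h \<in> {0..T}" using h t by auto
  have L: "(\<lambda>n. real (K1 h n) / real (r n) - real (K0 n) / real (r n)) \<longlonglongrightarrow> (1 + lam) * (t + h) - (1 + lam) * t"
    using KN_conv[OF th] KN_conv[OF t_in(1)] by (rule tendsto_diff)
  have eq: "real (card {K0 n<..K1 h n}) / real (r n) = real (K1 h n) / real (r n) - real (K0 n) / real (r n)" for n
    using blk_mono[OF h(1), of n] by (simp add: diff_divide_distrib of_nat_diff)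
  have e2: "(1 + lam) * (t + h) - (1 + lam) * t = (1 + lam) * h" by (simp add: algebra_simps)
  show ?thesis unfolding eq using L unfolding e2 .
qed

abbreviation "VK n k \<equiv> Vk lam p (r n) (V0 (r n)) U k"

lemma XV_VK: "XV lam p W U V0 (r n) s = VK n (W (real (r n) * s))"
  unfolding XV_def ..

lemma blk_dev:
  assumes h: "0 < h" and k: "k \<in> {K0 n<..K1 h n}"
  shows "\<bar>VK n (k - 1) j - VK n (K0 n) j\<bar> \<le> 2 * real (card {K0 n<..K1 h n}) / real (r n)"
proof -
  have le: "K0 n \<le> k - 1" using k by auto
  have "\<bar>VK n (k - 1) j - VK n (K0 n) j\<bar> \<le> 2 * real (k - 1 - K0 n) / real (r n)"
    by (rule Vk_bound[OF le])
  also have "\<dots> \<le> 2 * real (card {K0 n<..K1 h n}) / real (r n)"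
    using k by (intro divide_right_mono mult_left_mono) auto
  finally show ?thesis .
qed

lemma blk_incr:
  assumes h: "0 < h"
  shows "XA lam p W U V0 (r n) (t + h) i - XA lam p W U V0 (r n) t i =
      real (card {m \<in> {K0 n<..K1 h n}. aI lam (VK n (m - 1)) (U m) i}) / real (r n)"
    "XL lam p W U V0 (r n) (t + h) i - XL lam p W U V0 (r n) t i =
      real (card {m \<in> {K0 n<..K1 h n}. lI lam p (VK n (m - 1)) (U m) i}) / real (r n)"
    "XC lam p W U V0 (r n) (t + h) i - XC lam p W U V0 (r n) t i =
      real (card {m \<in> {K0 n<..K1 h n}. cI lam p (VK n (m - 1)) (U m) i}) / real (r n)"
proof -
  let ?ca = "counters_after lam p (r n) (V0 (r n)) U"
  show "XA lam p W U V0 (r n) (t + h) i - XA lam p W U V0 (r n) t i =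
      real (card {m \<in> {K0 n<..K1 h n}. aI lam (VK n (m - 1)) (U m) i}) / real (r n)"
    unfolding XA_def by (rule block_count[OF _ blk_mono[OF h]]) (simp only: ca_Suc_A diff_Suc_1)
  show "XL lam p W U V0 (r n) (t + h) i - XL lam p W U V0 (r n) t i =
      real (card {m \<in> {K0 n<..K1 h n}. lI lam p (VK n (m - 1)) (U m) i}) / real (r n)"
    unfolding XL_def by (rule block_count[OF _ blk_mono[OF h]]) (simp only: ca_Suc_L diff_Suc_1)
  show "XC lam p W U V0 (r n) (t + h) i - XC lam p W U V0 (r n) t i =
      real (card {m \<in> {K0 n<..K1 h n}. cI lam p (VK n (m - 1)) (U m) i}) / real (r n)"
    unfolding XC_def by (rule block_count[OF _ blk_mono[OF h]]) (simp only: ca_Suc_C diff_Suc_1)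
qed

end

context P2ctx begin

lemma d_props:
  assumes "i \<ge> 1"
  shows "0 \<le> v t (i - 1) - v t i" "v t (i - 1) - v t i \<le> 1"
    "0 \<le> v t i - v t (i + 1)" "v t i - v t (i + 1) \<le> 1"
proof -
  show "0 \<le> v t (i - 1) - v t i"
  proof (cases "i = 1")
    case True then show ?thesis using v_01[OF t_in(1)] by simp
  next
    case False
    then have "i - 1 \<ge> 1" "Suc (i - 1) = i" using assms by auto
    then show ?thesis using v_inv(2)[OF t_in(2), of "i - 1"] by simp
  qed
  show "v t (i - 1) - v t i \<le> 1" using v_inv(3)[OF t_in(2), of "i - 1"] assms by simp
  show "0 \<le> v t i - v t (i + 1)" using v_inv(2)[OF t_in(2), of i] assms by simp
  show "v t i - v t (i + 1) \<le> 1" using v_inv(3)[OF t_in(2), of i] by simp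
qed

lemma Xconv:
  assumes h: "0 < h" "h < T - t"
  shows "(\<lambda>n. XA lam p W U V0 (r n) (t + h) i - XA lam p W U V0 (r n) t i) \<longlonglongrightarrow> a (t + h) i - a t i"
    "(\<lambda>n. XL lam p W U V0 (r n) (t + h) i - XL lam p W U V0 (r n) t i) \<longlonglongrightarrow> l (t + h) i - l t i"
    "(\<lambda>n. XC lam p W U V0 (r n) (t + h) i - XC lam p W U V0 (r n) t i) \<longlonglongrightarrow> c (t + h) i - c t i"
proof -
  have th: "t + h \<in> {0..T}" using h t by auto
  show "(\<lambda>n. XA lam p W U V0 (r n) (t + h) i - XA lam p W U V0 (r n) t i) \<longlonglongrightarrow> a (t + h) i - a t i"
    using convA[OF th] convA[OF t_in(1)] by (rule tendsto_diff)
  show "(\<lambda>n. XL lam p W U V0 (r n) (t + h) i - XL lam p W U V0 (r n) t i) \<longlonglongrightarrow> l (t + h) i - l t i"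
    using convL[OF th] convL[OF t_in(1)] by (rule tendsto_diff)
  show "(\<lambda>n. XC lam p W U V0 (r n) (t + h) i - XC lam p W U V0 (r n) t i) \<longlonglongrightarrow> c (t + h) i - c t i"
    using convC[OF th] convC[OF t_in(1)] by (rule tendsto_diff)
qed

lemma dn_conv:
  "(\<lambda>n. VK n (K0 n) j - VK n (K0 n) j') \<longlonglongrightarrow> v t j - v t j'"
  using convV[OF t_in(1), of j] convV[OF t_in(1), of j'] unfolding XV_VK by (rule tendsto_diff)

lemma delta_conv:
  assumes h: "0 < h" "h < T - t"
  shows "(\<lambda>n. 4 * (real (card {K0 n<..K1 h n}) / real (r n))) \<longlonglongrightarrow> 4 * ((1 + lam) * h)"
  using blk_tot[OF h] by (rule tendsto_mult[OF tendsto_const])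

lemma dev2:
  assumes h: "0 < h" and k: "k \<in> {K0 n<..K1 h n}"
  shows "\<bar>(VK n (k - 1) j - VK n (k - 1) j') - (VK n (K0 n) j - VK n (K0 n) j')\<bar> \<le> 4 * (real (card {K0 n<..K1 h n}) / real (r n))"
proof -
  have "2 * real (card {K0 n<..K1 h n}) / real (r n) = 2 * (real (card {K0 n<..K1 h n}) / real (r n))" by simp
  then show ?thesis using blk_dev[OF h k, of j] blk_dev[OF h k, of j'] by linarith
qed

lemma A_bound:
  assumes h: "0 < h" "h < T - t" and i: "i \<ge> 1"
  shows "\<bar>(a (t + h) i - a t i) - lam * h * (v t (i - 1) - v t i)\<bar> \<le> lam * h * (4 * ((1 + lam) * h))"
proof -
  let ?cc = "lam / (1 + lam)"
  let ?R = "(1 + lam) * h"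
  let ?d = "v t (i - 1) - v t i"
  let ?\<delta> = "4 * ((1 + lam) * h)"
  let ?Dk = "\<lambda>n k. VK n (k - 1) (i - 1) - VK n (k - 1) i"
  have seteq: "{m \<in> {K0 n<..K1 h n}. aI lam (VK n (m - 1)) (U m) i} = {k \<in> {K0 n<..K1 h n}. U k \<in> (\<lambda>y. 0 + ?cc * y) ` {0..<?Dk n k}}" for n
    using i by (simp add: aI_def)
  have X: "(\<lambda>n. real (card {k \<in> {K0 n<..K1 h n}. U k \<in> (\<lambda>y. 0 + ?cc * y) ` {0..<?Dk n k}}) / real (r n)) \<longlonglongrightarrow> a (t + h) i - a t i"
    using Xconv(1)[OF h, of i] unfolding blk_incr(1)[OF h(1)] seteq .
  have cc1: "?cc < 1" using cc_lt by linarith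
  have R: "0 \<le> ?R" using lam h by simp
  note rl = RL[OF blk_LLN[OF h] blk_tot[OF h] U_range _ _ _ _ R d_props(1)[OF i] d_props(2)[OF i] _ dev2[OF h(1)] dn_conv delta_conv[OF h] X]
  have up: "a (t + h) i - a t i \<le> ?R * ?cc * (?d + ?\<delta>)" by (rule rl(1)) (use lam cc1 h in auto)
  have lo: "?R * ?cc * (?d - ?\<delta>) \<le> a (t + h) i - a t i" by (rule rl(2)) (use lam cc1 h in auto)
  have Rc: "?R * ?cc = lam * h" using lam by (simp add: field_simps)
  show ?thesis using up lo unfolding Rc by (simp add: abs_le_iff algebra_simps)
qed

lemma L_bound:
  assumes h: "0 < h" "h < T - t" and i: "i \<ge> 1"
  shows "\<bar>(l (t + h) i - l t i) - (1 - p) * h * (v t i - v t (i + 1))\<bar> \<le> (1 - p) * h * (4 * ((1 + lam) * h))"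
proof -
  let ?cc = "lam / (1 + lam)"
  let ?ee = "(1 - p) / (1 + lam)"
  let ?R = "(1 + lam) * h"
  let ?d = "v t i - v t (i + 1)"
  let ?\<delta> = "4 * ((1 + lam) * h)"
  let ?Dk = "\<lambda>n k. VK n (k - 1) i - VK n (k - 1) (i + 1)"
  have seteq: "{m \<in> {K0 n<..K1 h n}. lI lam p (VK n (m - 1)) (U m) i} = {k \<in> {K0 n<..K1 h n}. U k \<in> (\<lambda>y. ?cc + ?ee * y) ` {0..<?Dk n k}}" for n
    using i by (simp add: lI_def)
  have X: "(\<lambda>n. real (card {k \<in> {K0 n<..K1 h n}. U k \<in> (\<lambda>y. ?cc + ?ee * y) ` {0..<?Dk n k}}) / real (r n)) \<longlonglongrightarrow> l (t + h) i - l t i"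
    using Xconv(2)[OF h, of i] unfolding blk_incr(2)[OF h(1)] seteq .
  have cc1: "?cc < 1" using cc_lt by linarith
  have l1: "1 + lam > 0" using lam by simp
  have ce: "?cc + ?ee \<le> 1"
  proof -
    have "?cc + ?ee = (lam + (1 - p)) / (1 + lam)" by (simp add: add_divide_distrib)
    also have "\<dots> \<le> (1 + lam) / (1 + lam)" using p l1 by (intro divide_right_mono) auto
    finally show ?thesis using l1 by simp
  qed
  have R: "0 \<le> ?R" using lam h by simp
  have dev: "\<And>n k. k \<in> {K0 n<..K1 h n} \<Longrightarrow> \<bar>?Dk n k - (VK n (K0 n) i - VK n (K0 n) (i + 1))\<bar> \<le> 4 * (real (card {K0 n<..K1 h n}) / real (r n))"
    by (rule dev2[OF h(1)])
  note rl = RL[OF blk_LLN[OF h] blk_tot[OF h] U_range _ _ _ ce R d_props(3)[OF i] d_props(4)[OF i] _ dev dn_conv delta_conv[OF h] X]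
  have up: "l (t + h) i - l t i \<le> ?R * ?ee * (?d + ?\<delta>)" by (rule rl(1)) (use lam cc1 h p in auto)
  have lo: "?R * ?ee * (?d - ?\<delta>) \<le> l (t + h) i - l t i" by (rule rl(2)) (use lam cc1 h p in auto)
  have Re: "?R * ?ee = (1 - p) * h" using lam by (simp add: field_simps)
  show ?thesis using up lo unfolding Re by (simp add: abs_le_iff algebra_simps)
qed

end

context P2ctx begin

lemma qq_props: "0 \<le> p / (1 + lam)" "p / (1 + lam) \<le> 1"
proof -
  have l1: "1 + lam > 0" using lam by simp
  show "0 \<le> p / (1 + lam)" using p l1 by simp
  have "p \<le> 1 + lam" using p lam by simp
  then show "p / (1 + lam) \<le> 1" using l1 by simp
qed

lemma C_upper:
  assumes h: "0 < h" "h < T - t" and i: "i \<ge> 1"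
  shows "c (t + h) i - c t i \<le> p * h"
proof -
  have X: "(\<lambda>n. real (card {m \<in> {K0 n<..K1 h n}. cI lam p (VK n (m - 1)) (U m) i}) / real (r n)) \<longlonglongrightarrow> c (t + h) i - c t i"
    using Xconv(3)[OF h, of i] unfolding blk_incr(3)[OF h(1)] .
  have "c (t + h) i - c t i \<le> p / (1 + lam) * ((1 + lam) * h)"
    by (rule RC_upper[OF blk_LLN[OF h] qq_props X]) (auto simp: cI_def)
  also have "\<dots> = p * h" using lam by (simp add: field_simps)
  finally show ?thesis .
qed

lemma C_exact:
  assumes h: "0 < h" "h < T - t" and i: "i \<ge> 1" and vt: "2 * ((1 + lam) * h) < v t i"
  shows "c (t + h) i - c t i = p * h"
proof -
  have X: "(\<lambda>n. real (card {m \<in> {K0 n<..K1 h n}. cI lam p (VK n (m - 1)) (U m) i}) / real (r n)) \<longlonglongrightarrow> c (t + h) i - c t i"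
    using Xconv(3)[OF h, of i] unfolding blk_incr(3)[OF h(1)] .
  have L: "(\<lambda>n. VK n (K0 n) i - 2 * (real (card {K0 n<..K1 h n}) / real (r n))) \<longlonglongrightarrow> v t i - 2 * ((1 + lam) * h)"
    using convV[OF t_in(1), of i] blk_tot[OF h] unfolding XV_VK
    by (intro tendsto_diff tendsto_mult tendsto_const)
  have ev0: "\<forall>\<^sub>F n in sequentially. 0 < VK n (K0 n) i - 2 * (real (card {K0 n<..K1 h n}) / real (r n))"
    by (rule order_tendstoD(1)[OF L]) (use vt in simp)
  have ev: "\<forall>\<^sub>F n in sequentially. \<forall>k \<in> {K0 n<..K1 h n}. cI lam p (VK n (k - 1)) (U k) i \<longleftrightarrow> 1 - p / (1 + lam) \<le> U k \<and> U k < 1"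
    using ev0
  proof eventually_elim
    case (elim n)
    show ?case
    proof
      fix k assume k: "k \<in> {K0 n<..K1 h n}"
      have "\<bar>VK n (k - 1) i - VK n (K0 n) i\<bar> \<le> 2 * real (card {K0 n<..K1 h n}) / real (r n)"
        by (rule blk_dev[OF h(1) k])
      then have "0 < VK n (k - 1) i" using elim by simp
      then show "cI lam p (VK n (k - 1)) (U k) i \<longleftrightarrow> 1 - p / (1 + lam) \<le> U k \<and> U k < 1"
        using i unfolding cI_def by auto
    qed
  qed
  have "c (t + h) i - c t i = p / (1 + lam) * ((1 + lam) * h)"
    by (rule RC_exact[OF blk_LLN[OF h] qq_props X ev])
  also have "\<dots> = p * h" using lam by (simp add: field_simps)
  finally show ?thesis .
qed

end

context P2ctx begin

lemma Tt: "T - t > 0" using t by simp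

lemma derivs:
  "((\<lambda>s. v s i) has_real_derivative deriv (\<lambda>s. v s i) t) (at t)"
  "((\<lambda>s. a s i) has_real_derivative deriv (\<lambda>s. a s i) t) (at t)"
  "((\<lambda>s. l s i) has_real_derivative deriv (\<lambda>s. l s i) t) (at t)"
  "((\<lambda>s. c s i) has_real_derivative deriv (\<lambda>s. c s i) t) (at t)"
  using diff by (simp_all add: DERIV_deriv_iff_real_differentiable)

lemma a_deriv:
  assumes i: "i \<ge> 1"
  shows "((\<lambda>s. a s i) has_real_derivative lam * (v t (i - 1) - v t i)) (at t)"
proof -
  have "deriv (\<lambda>s. a s i) t = lam * (v t (i - 1) - v t i)"
  proof (rule deriv_eq_from_bound[OF derivs(2) Tt])
    show "0 \<le> 4 * lam * (1 + lam)" using lam by simp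
    fix h :: real assume h: "0 < h" "h < T - t"
    show "\<bar>a (t + h) i - a t i - lam * (v t (i - 1) - v t i) * h\<bar> \<le> 4 * lam * (1 + lam) * h * h"
      using A_bound[OF h i] by (simp add: algebra_simps)
  qed
  then show ?thesis using derivs(2)[of i] by simp
qed

lemma l_deriv:
  assumes i: "i \<ge> 1"
  shows "((\<lambda>s. l s i) has_real_derivative (1 - p) * (v t i - v t (i + 1))) (at t)"
proof -
  have "deriv (\<lambda>s. l s i) t = (1 - p) * (v t i - v t (i + 1))"
  proof (rule deriv_eq_from_bound[OF derivs(3) Tt])
    show "0 \<le> 4 * (1 - p) * (1 + lam)" using lam p by simp
    fix h :: real assume h: "0 < h" "h < T - t"
    show "\<bar>l (t + h) i - l t i - (1 - p) * (v t i - v t (i + 1)) * h\<bar> \<le> 4 * (1 - p) * (1 + lam) * h * h"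
      using L_bound[OF h i] by (simp add: algebra_simps)
  qed
  then show ?thesis using derivs(3)[of i] by simp
qed

lemma c_deriv:
  assumes i: "i \<ge> 1"
  shows "((\<lambda>s. c s i) has_real_derivative g_fun lam p (v t) i) (at t)"
proof -
  have l1: "1 + lam > 0" using lam by simp
  have vnn: "0 \<le> v t i" using v_inv(1)[OF t_in(2) i] .
  show ?thesis
  proof (cases "v t i > 0")
    case True
    define h0 where "h0 = min (T - t) (v t i / (2 * (1 + lam)))"
    have h0: "h0 > 0" unfolding h0_def using Tt True l1 by simp
    have "deriv (\<lambda>s. c s i) t = p"
    proof (rule deriv_eq_from_bound[OF derivs(4) h0, of 0])
      fix h :: real assume h: "0 < h" "h < h0"
      have h1: "h < T - t" using h unfolding h0_def by simp
      have "h < v t i / (2 * (1 + lam))" using h unfolding h0_def by simp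
      then have "2 * ((1 + lam) * h) < v t i" using l1 by (simp add: field_simps)
      then show "\<bar>c (t + h) i - c t i - p * h\<bar> \<le> 0 * h * h" using C_exact[OF h(1) h1 i] by simp
    qed simp
    moreover have "g_fun lam p (v t) i = p" using True by (simp add: g_fun_def)
    ultimately show ?thesis using derivs(4)[of i] by simp
  next
    case False
    then have v0: "v t i = 0" using vnn by simp
    have v1: "v t (i + 1) = 0" using v_inv(2)[OF t_in(2) i] v_inv(1)[OF t_in(2), of "i + 1"] v0 by simp
    let ?Da = "lam * (v t (i - 1) - v t i)"
    let ?Dl = "(1 - p) * (v t i - v t (i + 1))"
    let ?Dc = "deriv (\<lambda>s. c s i) t"
    have D: "((\<lambda>s. v0 i + a s i - l s i - c s i) has_real_derivative 0 + ?Da - ?Dl - ?Dc) (at t)"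
      by (intro derivative_intros a_deriv[OF i] l_deriv[OF i] derivs(4))
    have Dv: "((\<lambda>s. v s i) has_real_derivative 0 + ?Da - ?Dl - ?Dc) (at t)"
    proof (rule has_field_derivative_transform_within_open[OF D, of "{0<..<T}"])
      show "open {0<..<T::real}" by simp
      show "t \<in> {0<..<T}" using t .
      fix s :: real assume "s \<in> {0<..<T}"
      then show "v0 i + a s i - l s i - c s i = v s i" using v_id[of s i] i by simp
    qed
    have "0 + ?Da - ?Dl - ?Dc = 0"
    proof (rule DERIV_local_min[OF Dv, of "min t (T - t)"])
      show "0 < min t (T - t)" using t by simp
      show "\<forall>y. \<bar>t - y\<bar> < min t (T - t) \<longrightarrow> v t i \<le> v y i"
      proof (intro allI impI)
        fix y assume "\<bar>t - y\<bar> < min t (T - t)"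
        then have "y \<in> {0<..T}" by auto
        then show "v t i \<le> v y i" using v_inv(1)[of y i] i v0 by simp
      qed
    qed
    then have Dc: "?Dc = lam * v t (i - 1)" using v0 v1 by simp
    have le: "?Dc \<le> p"
    proof (rule deriv_le_from_bound[OF derivs(4) Tt])
      fix h :: real assume h: "0 < h" "h < T - t"
      then show "c (t + h) i - c t i \<le> p * h" using C_upper[OF h i] by simp
    qed
    have vm: "0 \<le> v t (i - 1)" using d_props(1)[OF i] v0 by simp
    have "g_fun lam p (v t) i = lam * v t (i - 1)"
    proof (cases "0 < v t (i - 1)")
      case True
      then have "g_fun lam p (v t) i = min (lam * v t (i - 1)) p" using v0 by (simp add: g_fun_def)
      then show ?thesis using le Dc by simp
    next
      case False
      then have "v t (i - 1) = 0" using vm by simp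
      then show ?thesis using v0 by (simp add: g_fun_def)
    qed
    then show ?thesis using derivs(4)[of i] Dc by simp
  qed
qed

lemma main:
  "(\<forall>i\<ge>1.
            ((\<lambda>s. a s i) has_real_derivative lam * (v t (i - 1) - v t i)) (at t)
          \<and> ((\<lambda>s. l s i) has_real_derivative (1 - p) * (v t i - v t (i + 1))) (at t)
          \<and> ((\<lambda>s. c s i) has_real_derivative g_fun lam p (v t) i) (at t))
        \<and> v 0 = v0
        \<and> (\<forall>s\<in>{0..T}. v s 0 - v s 1 = 1)"
  using a_deriv l_deriv c_deriv v_init v_01 by blast

end

theorem proposition2:
  fixes lam p T :: real
    and W :: "real \<Rightarrow> nat"
    and U :: "nat \<Rightarrow> real"
    and V0 :: "nat \<Rightarrow> nat \<Rightarrow> real"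
    and v0 :: "nat \<Rightarrow> real"
    and r :: "nat \<Rightarrow> nat"
    and v a l c :: "real \<Rightarrow> nat \<Rightarrow> real"
    and t :: real
  assumes lam: "0 \<le> lam" "lam < 1"
    and p: "0 \<le> p" "p \<le> 1"
    and T: "T > 0"
    and W_path: "counting_path W"
    and U_range: "\<forall>k\<ge>1. 0 \<le> U k \<and> U k \<le> 1"
    and V0_space: "\<forall>N\<ge>1. V0 N \<in> Vbar_inf \<and> (\<forall>i. \<exists>m::nat. V0 N i = real m / real N)"
    and C_W: "(\<lambda>N. SUP s\<in>{0..T}. ennreal \<bar>real (W (real N * s)) / real N - (1 + lam) * s\<bar>)
               \<longlonglongrightarrow> 0"
    and C_U: "\<forall>a b. 0 \<le> a \<and> a < b \<and> b \<le> 1 \<longrightarrow>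
               (\<lambda>N. real (card {k \<in> {1..N}. a \<le> U k \<and> U k < b}) / real N) \<longlonglongrightarrow> b - a"
    and v0_space: "v0 \<in> Vbar_inf"
    and init: "(\<lambda>N. wnorm (\<lambda>i. V0 N i - v0 i)) \<longlonglongrightarrow> 0"
    and lip: "\<forall>i. (\<exists>K. K-lipschitz_on {0..T} (\<lambda>s. v s i)) \<and> (\<exists>K. K-lipschitz_on {0..T} (\<lambda>s. a s i))
                 \<and> (\<exists>K. K-lipschitz_on {0..T} (\<lambda>s. l s i)) \<and> (\<exists>K. K-lipschitz_on {0..T} (\<lambda>s. c s i))"
    and subseq: "strict_mono r"
    and limV: "(\<lambda>n. dZ T (XV lam p W U V0 (r n)) v) \<longlonglongrightarrow> 0"
    and limA: "(\<lambda>n. dZ T (XA lam p W U V0 (r n)) a) \<longlonglongrightarrow> 0"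
    and limL: "(\<lambda>n. dZ T (XL lam p W U V0 (r n)) l) \<longlonglongrightarrow> 0"
    and limC: "(\<lambda>n. dZ T (XC lam p W U V0 (r n)) c) \<longlonglongrightarrow> 0"
    and t: "t \<in> {0<..<T}"
    and diff: "\<forall>i. (\<lambda>s. v s i) differentiable (at t) \<and> (\<lambda>s. a s i) differentiable (at t)
                 \<and> (\<lambda>s. l s i) differentiable (at t) \<and> (\<lambda>s. c s i) differentiable (at t)"
  shows "(\<forall>i\<ge>1.
            ((\<lambda>s. a s i) has_real_derivative lam * (v t (i - 1) - v t i)) (at t)
          \<and> ((\<lambda>s. l s i) has_real_derivative (1 - p) * (v t i - v t (i + 1))) (at t)
          \<and> ((\<lambda>s. c s i) has_real_derivative g_fun lam p (v t) i) (at t))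
        \<and> v 0 = v0
        \<and> (\<forall>s\<in>{0..T}. v s 0 - v s 1 = 1)"
  proof -
  have "P2ctx lam p T W U V0 v0 r v a l c t"
    by (rule P2ctx.intro) (fact assms)+
  then show ?thesis by (rule P2ctx.main)
qed

end
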